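(* Let $l$ be a prime with $l\equiv 4\pmod 5$, let $j\in\mathbb{F}_l$ with $j\neq 0,1728$, and let $a_1\in\mathbb{F}_l$ be a root of $G(x^5,j)\equiv 0\pmod l$, where $G(x,j)=(x^4-228x^3+494x^2+228x+1)^3-jx(1-11x-x^2)^5$. Then $M(a_1)\in\mathbb{F}_{l^2}\setminus\mathbb{F}_l$ for every $M\in\bar G_{60}\setminus\bar H$.
   Context: Since $l\equiv 4\pmod 5$, a primitive $5$th root of unity $\zeta$ lies in $\mathbb{F}_{l^2}\setminus\mathbb{F}_l$; put $\sqrt5=\zeta-\zeta^2-\zeta^3+\zeta^4\in\mathbb{F}_l$. Let $\bar G_{60}$ be the group of linear fractional transformations over $\mathbb{F}_{l^2}$ generated by $S(z)=\zeta z$ and $T(z)=\dfrac{-(1+\sqrt5)z+2}{2z+1+\sqrt5}$ (it is isomorphic to $A_5$; it is the reduction of the icosahedral group $G_{60}$ defined by the same formulas over $\mathbb{Q}(\zeta_5)$). Let $U(z)=-1/z$ and $\bar H=\{1,T,U,TU\}\subset \bar G_{60}$. *)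

theory Defs
  imports Main "HOL-Computational_Algebra.Primes"
begin

text \<open>A 2x2 matrix (a,b,c,d) represents the linear fractional transformation
  z \<mapsto> (a z + b)/(c z + d) on the projective line; None stands for the point at infinity.\<close>

type_synonym 'a mat2 = "'a \<times> 'a \<times> 'a \<times> 'a"

fun mmul :: "'a::comm_ring_1 mat2 \<Rightarrow> 'a mat2 \<Rightarrow> 'a mat2" where
  "mmul (a,b,c,d) (e,f,g,h) = (a*e + b*g, a*f + b*h, c*e + d*g, c*f + d*h)"

fun smul2 :: "'a::comm_ring_1 \<Rightarrow> 'a mat2 \<Rightarrow> 'a mat2" where
  "smul2 k (a,b,c,d) = (k*a, k*b, k*c, k*d)"

text \<open>Two matrices define the same linear fractional transformation iff they are proportional.\<close>
definition proj_eq :: "'a::field mat2 \<Rightarrow> 'a mat2 \<Rightarrow> bool" where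
  "proj_eq M N \<longleftrightarrow> (\<exists>k. k \<noteq> 0 \<and> M = smul2 k N)"

fun mob_app :: "'a::field mat2 \<Rightarrow> 'a \<Rightarrow> 'a option" where
  "mob_app (a,b,c,d) z = (if c*z + d = 0 then None else Some ((a*z + b) / (c*z + d)))"

definition sqrt5 :: "'a::field \<Rightarrow> 'a" where
  "sqrt5 \<zeta> = \<zeta> - \<zeta>^2 - \<zeta>^3 + \<zeta>^4"

definition Smat :: "'a::field \<Rightarrow> 'a mat2" where
  "Smat \<zeta> = (\<zeta>, 0, 0, 1)"

definition Tmat :: "'a::field \<Rightarrow> 'a mat2" where
  "Tmat \<zeta> = (-(1 + sqrt5 \<zeta>), 2, 2, 1 + sqrt5 \<zeta>)"

definition Umat :: "'a::field mat2" where
  "Umat = (0, -1, 1, 0)"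

definition Imat :: "'a::field mat2" where
  "Imat = (1, 0, 0, 1)"

text \<open>Matrices representing the elements of the group generated by S and T.
  Since that group is finite, the monoid generated by S and T is the whole group.\<close>
inductive_set G60mats :: "'a::field \<Rightarrow> 'a mat2 set" for \<zeta> where
  G60_id: "Imat \<in> G60mats \<zeta>"
| G60_S: "M \<in> G60mats \<zeta> \<Longrightarrow> mmul M (Smat \<zeta>) \<in> G60mats \<zeta>"
| G60_T: "M \<in> G60mats \<zeta> \<Longrightarrow> mmul M (Tmat \<zeta>) \<in> G60mats \<zeta>"

definition Hmats :: "'a::field \<Rightarrow> 'a mat2 set" where
  "Hmats \<zeta> = {Imat, Tmat \<zeta>, Umat, mmul (Tmat \<zeta>) Umat}"

definition Fprime :: "'a::field set" where
  "Fprime = range of_int"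

definition Gpol :: "'a::field \<Rightarrow> 'a \<Rightarrow> 'a" where
  "Gpol x j = (x^4 - 228*x^3 + 494*x^2 + 228*x + 1)^3 - j*x*(1 - 11*x - x^2)^5"

end

theory Submission
  imports Defs
begin
type_synonym z4 = "int \<times> int \<times> int \<times> int"
type_synonym m4 = "z4 \<times> z4 \<times> z4 \<times> z4"

fun ze :: "'a::field \<Rightarrow> z4 \<Rightarrow> 'a" where
  "ze z (a0,a1,a2,a3) = of_int a0 + of_int a1 * z + of_int a2 * z^2 + of_int a3 * z^3"

fun zmul :: "z4 \<Rightarrow> z4 \<Rightarrow> z4" where
  "zmul (a0,a1,a2,a3) (b0,b1,b2,b3) =
    (let r0 = a0*b0; r1 = a0*b1 + a1*b0; r2 = a0*b2 + a1*b1 + a2*b0;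
         r3 = a0*b3 + a1*b2 + a2*b1 + a3*b0; r4 = a1*b3 + a2*b2 + a3*b1;
         r5 = a2*b3 + a3*b2; r6 = a3*b3
     in (r0 - r4 + r5, r1 - r4 + r6, r2 - r4, r3 - r4))"

fun zadd :: "z4 \<Rightarrow> z4 \<Rightarrow> z4" where
  "zadd (a0,a1,a2,a3) (b0,b1,b2,b3) = (a0+b0, a1+b1, a2+b2, a3+b3)"

fun zneg :: "z4 \<Rightarrow> z4" where
  "zneg (a0,a1,a2,a3) = (-a0, -a1, -a2, -a3)"

fun zconj :: "z4 \<Rightarrow> z4" where
  "zconj (a0,a1,a2,a3) = (a0-a1, -a1, a3-a1, a2-a1)"

fun zg2 :: "z4 \<Rightarrow> z4" where
  "zg2 (a0,a1,a2,a3) = (a0-a2, a3-a2, a1-a2, -a2)"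

fun zg3 :: "z4 \<Rightarrow> z4" where
  "zg3 (a0,a1,a2,a3) = (a0-a3, a2-a3, -a3, a1-a3)"

definition good :: "int \<Rightarrow> bool" where
  "good n \<longleftrightarrow> n \<noteq> 0 \<and> n dvd 100000000000000000000"

definition zcof :: "z4 \<Rightarrow> z4" where
  "zcof k = zmul (zg2 k) (zmul (zg3 k) (zconj k))"

fun nzc :: "z4 \<Rightarrow> bool" where
  "nzc k = (case zmul k (zcof k) of (n,a,b,c) \<Rightarrow> a = 0 \<and> b = 0 \<and> c = 0 \<and> good n)"

fun mmul4 :: "m4 \<Rightarrow> m4 \<Rightarrow> m4" where
  "mmul4 (a,b,c,d) (e,f,g,h) =
     (zadd (zmul a e) (zmul b g), zadd (zmul a f) (zmul b h),
      zadd (zmul c e) (zmul d g), zadd (zmul c f) (zmul d h))"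

fun smul4 :: "z4 \<Rightarrow> m4 \<Rightarrow> m4" where
  "smul4 k (a,b,c,d) = (zmul k a, zmul k b, zmul k c, zmul k d)"

fun adj4 :: "m4 \<Rightarrow> m4" where
  "adj4 (a,b,c,d) = (d, zneg b, zneg c, a)"

fun conj4 :: "m4 \<Rightarrow> m4" where
  "conj4 (a,b,c,d) = (zconj a, zconj b, zconj c, zconj d)"

fun me :: "'a::field \<Rightarrow> m4 \<Rightarrow> 'a mat2" where
  "me z (a,b,c,d) = (ze z a, ze z b, ze z c, ze z d)"

definition I4 :: m4 where "I4 = ((1,0,0,0),(0,0,0,0),(0,0,0,0),(1,0,0,0))"
definition S4 :: m4 where "S4 = ((0,1,0,0),(0,0,0,0),(0,0,0,0),(1,0,0,0))"
definition T4 :: m4 where "T4 = ((0,0,2,2),(2,0,0,0),(2,0,0,0),(0,0,-2,-2))"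
definition U4 :: m4 where "U4 = ((0,0,0,0),(-1,0,0,0),(1,0,0,0),(0,0,0,0))"
definition S24 :: m4 where "S24 = ((0,0,1,0),(0,0,0,0),(0,0,0,0),(1,0,0,0))"
definition R34 :: m4 where "R34 = ((-1, -1, -1, 0), (0, 1, 0, 0), (1, 0, 0, 0), (0, 0, -1, -1))"

definition rmat :: "nat \<Rightarrow> m4" where
  "rmat n = (if n = 0 then S4 else if n = 1 then S24 else if n = 2 then U4 else R34)"

definition evalword :: "bool list \<Rightarrow> m4" where
  "evalword w = foldl (\<lambda>M b. mmul4 M (if b then T4 else S4)) I4 w"

definition gmat :: "m4 \<Rightarrow> m4" where
  "gmat L = mmul4 (adj4 L) (conj4 L)"

datatype cert = InH | Cert "bool list" nat z4 z4

type_synonym row = "m4 \<times> z4 \<times> z4 \<times> m4 \<times> z4 \<times> z4 \<times> m4 \<times> cert"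

fun chk_cert :: "m4 \<Rightarrow> cert \<Rightarrow> bool" where
  "chk_cert L InH = (L \<in> set [I4, T4, U4, mmul4 T4 U4])"
| "chk_cert L (Cert w n k1 k2) = (n < 4 \<and> nzc k1 \<and>
      smul4 k1 (mmul4 (rmat n) (evalword w)) = smul4 k2 (mmul4 (evalword w) (gmat L)))"

fun chk_row :: "m4 list \<Rightarrow> row \<Rightarrow> bool" where
  "chk_row R (L, k1, k2, LS, k1', k2', LT, c) =
     (smul4 k1 (mmul4 L S4) = smul4 k2 LS \<and> nzc k1 \<and> nzc k2 \<and> LS \<in> set R \<and>
      smul4 k1' (mmul4 L T4) = smul4 k2' LT \<and> nzc k1' \<and> nzc k2' \<and> LT \<in> set R \<and>
      chk_cert L c)"

definition data :: "row list" where
  "data = [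
   (((1, 0, 0, 0), (0, 0, 0, 0), (0, 0, 0, 0), (1, 0, 0, 0)), (0, 1, 0, 0), (0, 1, 0, 0), ((0, 1, 0, 0), (0, 0, 0, 0), (0, 0, 0, 0), (1, 0, 0, 0)), (0, 0, 2, 2), (0, 0, 2, 2), ((0, 0, 2, 2), (2, 0, 0, 0), (2, 0, 0, 0), (0, 0, -2, -2)), InH),
   (((0, 1, 0, 0), (0, 0, 0, 0), (0, 0, 0, 0), (1, 0, 0, 0)), (0, 0, 1, 0), (0, 0, 1, 0), ((0, 0, 1, 0), (0, 0, 0, 0), (0, 0, 0, 0), (1, 0, 0, 0)), (-1, -1, -1, 0), (-2, -2, -2, 0), ((-1, -1, -1, 0), (0, 1, 0, 0), (1, 0, 0, 0), (0, 0, -1, -1)), Cert [True, False, False, False, True, False, False, True] 1 (24, 48, 32, 16) (-16, 8, 32, 16)),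
   (((0, 0, 2, 2), (2, 0, 0, 0), (2, 0, 0, 0), (0, 0, -2, -2)), (-1, -1, -1, 0), (-2, -2, -2, 0), ((-1, -1, -1, 0), (1, 0, 0, 0), (0, 1, 0, 0), (0, 0, -1, -1)), (1, 0, 0, 0), (8, 0, -4, -4), ((1, 0, 0, 0), (0, 0, 0, 0), (0, 0, 0, 0), (1, 0, 0, 0)), InH),
   (((0, 0, 1, 0), (0, 0, 0, 0), (0, 0, 0, 0), (1, 0, 0, 0)), (0, 0, 0, 1), (0, 0, 0, 1), ((0, 0, 0, 1), (0, 0, 0, 0), (0, 0, 0, 0), (1, 0, 0, 0)), (0, -1, -1, -1), (0, -2, -2, -2), ((0, -1, -1, -1), (0, 0, 1, 0), (1, 0, 0, 0), (0, 0, -1, -1)), Cert [] 0 (0, 0, 0, 1) (0, 1, 0, 0)),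
   (((-1, -1, -1, 0), (0, 1, 0, 0), (1, 0, 0, 0), (0, 0, -1, -1)), (0, -1, -1, -1), (0, -1, -1, -1), ((0, -1, -1, -1), (0, 1, 0, 0), (0, 1, 0, 0), (0, 0, -1, -1)), (0, 1, 0, 0), (2, 6, 2, 0), ((0, 1, 0, 0), (0, 0, 0, 0), (0, 0, 0, 0), (1, 0, 0, 0)), Cert [True, False, False, False, True, False, False] 1 (-12, -24, -16, -8) (-4, 0, 4, 0)),
   (((-1, -1, -1, 0), (1, 0, 0, 0), (0, 1, 0, 0), (0, 0, -1, -1)), (0, -1, -1, -1), (0, -1, -1, -1), ((0, -1, -1, -1), (1, 0, 0, 0), (0, 0, 1, 0), (0, 0, -1, -1)), (2, 2, 1, 0), (4, 4, 2, 0), ((2, 2, 1, 0), (-1, -1, -2, -1), (-1, -1, -2, -1), (1, 1, -1, -1)), Cert [True, False, False, False, True, False, False, True] 1 (-80, -160, -120, -40) (-16, 8, 32, 16)),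
   (((0, 0, 0, 1), (0, 0, 0, 0), (0, 0, 0, 0), (1, 0, 0, 0)), (-1, -1, -1, -1), (-1, -1, -1, -1), ((-1, -1, -1, -1), (0, 0, 0, 0), (0, 0, 0, 0), (1, 0, 0, 0)), (1, 1, 0, 0), (2, 2, 0, 0), ((1, 1, 0, 0), (0, 0, 0, 1), (1, 0, 0, 0), (0, 0, -1, -1)), Cert [True, False, False, False, True, False, False, True] 0 (-16, -32, -8, 16) (24, 48, 32, 16)),
   (((0, -1, -1, -1), (0, 0, 1, 0), (1, 0, 0, 0), (0, 0, -1, -1)), (1, 1, 0, 0), (1, 1, 0, 0), ((1, 1, 0, 0), (0, 0, 1, 0), (0, 1, 0, 0), (0, 0, -1, -1)), (0, 0, 1, 0), (0, 2, 6, 2), ((0, 0, 1, 0), (0, 0, 0, 0), (0, 0, 0, 0), (1, 0, 0, 0)), Cert [True] 0 (-6, -6, 0, 2) (-2, -2, -2, 0)),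
   (((0, -1, -1, -1), (0, 1, 0, 0), (0, 1, 0, 0), (0, 0, -1, -1)), (1, 1, 0, 0), (1, 1, 0, 0), ((1, 1, 0, 0), (0, 1, 0, 0), (0, 0, 1, 0), (0, 0, -1, -1)), (0, 2, 2, 1), (0, 4, 4, 2), ((0, 2, 2, 1), (1, 0, 0, -1), (-1, -1, -2, -1), (1, 1, -1, -1)), Cert [True] 1 (-6, -8, -6, 0) (0, -2, -2, -2)),
   (((0, -1, -1, -1), (1, 0, 0, 0), (0, 0, 1, 0), (0, 0, -1, -1)), (1, 1, 0, 0), (1, 1, 0, 0), ((1, 1, 0, 0), (1, 0, 0, 0), (0, 0, 0, 1), (0, 0, -1, -1)), (1, 1, 2, 1), (2, 2, 4, 2), ((1, 1, 2, 1), (0, -1, -2, -2), (0, -1, -2, -2), (1, 0, 0, -1)), Cert [] 0 (1, 1, 0, -2) (0, 1, 0, 0)),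
   (((2, 2, 1, 0), (-1, -1, -2, -1), (-1, -1, -2, -1), (1, 1, -1, -1)), (0, 2, 2, 1), (0, 2, 2, 1), ((0, 2, 2, 1), (-1, -1, -2, -1), (1, 0, 0, -1), (1, 1, -1, -1)), (-1, -1, -1, 0), (-6, -8, -6, 0), ((-1, -1, -1, 0), (1, 0, 0, 0), (0, 1, 0, 0), (0, 0, -1, -1)), Cert [True, False, False, False, True, False, False] 1 (40, 80, 60, 20) (-4, 0, 4, 0)),
   (((-1, -1, -1, -1), (0, 0, 0, 0), (0, 0, 0, 0), (1, 0, 0, 0)), (1, 0, 0, 0), (1, 0, 0, 0), ((1, 0, 0, 0), (0, 0, 0, 0), (0, 0, 0, 0), (1, 0, 0, 0)), (0, 2, 2, 1), (0, 2, 2, 0), ((0, 2, 2, 1), (-1, -1, -2, -1), (1, 0, 0, -1), (1, 1, -1, -1)), Cert [] 1 (0, 1, 0, 0) (0, 0, 1, 0)),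
   (((1, 1, 0, 0), (0, 0, 0, 1), (1, 0, 0, 0), (0, 0, -1, -1)), (0, 1, 1, 0), (0, 1, 1, 0), ((0, 1, 1, 0), (0, 0, 0, 1), (0, 1, 0, 0), (0, 0, -1, -1)), (0, 0, 0, 1), (-2, -2, 0, 4), ((0, 0, 0, 1), (0, 0, 0, 0), (0, 0, 0, 0), (1, 0, 0, 0)), Cert [True, False, False, False, True, False, False] 0 (8, 16, 4, -8) (4, 8, 4, 4)),
   (((1, 1, 0, 0), (0, 0, 1, 0), (0, 1, 0, 0), (0, 0, -1, -1)), (0, 1, 1, 0), (0, 1, 1, 0), ((0, 1, 1, 0), (0, 0, 1, 0), (0, 0, 1, 0), (0, 0, -1, -1)), (-1, -1, 1, 1), (-2, -2, 2, 2), ((-1, -1, 1, 1), (1, 2, 1, 1), (-1, -1, -2, -1), (1, 1, -1, -1)), Cert [False, False, False] 3 (0, 1, 2, 2) (0, 1, 1, 0)),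
   (((1, 1, 0, 0), (0, 1, 0, 0), (0, 0, 1, 0), (0, 0, -1, -1)), (0, 1, 1, 0), (0, 1, 1, 0), ((0, 1, 1, 0), (0, 1, 0, 0), (0, 0, 0, 1), (0, 0, -1, -1)), (-1, 0, 0, 1), (-2, 0, 0, 2), ((-1, 0, 0, 1), (2, 2, 1, 0), (0, -1, -2, -2), (1, 0, 0, -1)), Cert [False, False, True, False, False, False] 3 (4, 6, 6, 4) (0, 2, 0, -2)),
   (((0, 2, 2, 1), (1, 0, 0, -1), (-1, -1, -2, -1), (1, 1, -1, -1)), (0, 0, 2, 2), (-1, -1, 1, 1), ((0, 0, 2, 2), (2, 0, 0, 0), (2, 0, 0, 0), (0, 0, -2, -2)), (0, -1, -1, -1), (0, -6, -8, -6), ((0, -1, -1, -1), (0, 1, 0, 0), (0, 1, 0, 0), (0, 0, -1, -1)), Cert [] 1 (-5, -10, -5, 0) (0, 0, 1, 0)),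
   (((1, 1, 0, 0), (1, 0, 0, 0), (0, 0, 0, 1), (0, 0, -1, -1)), (0, 2, 2, 1), (0, 1, 1, 0), ((0, 2, 2, 1), (1, 0, 0, -1), (-1, -1, -2, -1), (1, 1, -1, -1)), (0, -1, 0, 1), (0, -2, 0, 2), ((0, -1, 0, 1), (1, 1, -1, -1), (1, 1, -1, -1), (1, 0, -1, 0)), Cert [True, False, False, False, True, False, False, True] 0 (80, 120, 40, -40) (24, 48, 32, 16)),
   (((1, 1, 2, 1), (0, -1, -2, -2), (0, -1, -2, -2), (1, 0, 0, -1)), (-1, 0, 0, 1), (-1, 0, 0, 1), ((-1, 0, 0, 1), (0, -1, -2, -2), (2, 2, 1, 0), (1, 0, 0, -1)), (0, -1, -1, -1), (0, -6, -8, -6), ((0, -1, -1, -1), (1, 0, 0, 0), (0, 0, 1, 0), (0, 0, -1, -1)), Cert [True] 0 (20, 20, 0, -10) (-2, -2, -2, 0)),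
   (((0, 2, 2, 1), (-1, -1, -2, -1), (1, 0, 0, -1), (1, 1, -1, -1)), (-1, -1, 1, 1), (-1, -1, 1, 1), ((-1, -1, 1, 1), (-1, -1, -2, -1), (1, 2, 1, 1), (1, 1, -1, -1)), (-1, -1, -1, -1), (-4, -8, -12, -6), ((-1, -1, -1, -1), (0, 0, 0, 0), (0, 0, 0, 0), (1, 0, 0, 0)), Cert [True] 1 (20, 30, 20, 0) (0, -2, -2, -2)),
   (((0, 1, 1, 0), (0, 0, 0, 1), (0, 1, 0, 0), (0, 0, -1, -1)), (0, 0, 1, 1), (0, 0, 1, 1), ((0, 0, 1, 1), (0, 0, 0, 1), (0, 0, 1, 0), (0, 0, -1, -1)), (-1, -2, -2, 0), (-2, -4, -4, 0), ((-1, -2, -2, 0), (-1, 0, 1, 0), (-1, -1, -2, -1), (1, 1, -1, -1)), Cert [False, True, False, False, False] 2 (2, 2, 0, -4) (0, 0, 0, -2)),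
   (((0, 1, 1, 0), (0, 0, 1, 0), (0, 0, 1, 0), (0, 0, -1, -1)), (0, 0, 1, 1), (0, 0, 1, 1), ((0, 0, 1, 1), (0, 0, 1, 0), (0, 0, 0, 1), (0, 0, -1, -1)), (-1, -2, -1, -1), (-2, -4, -2, -2), ((-1, -2, -1, -1), (0, 2, 2, 1), (0, -1, -2, -2), (1, 0, 0, -1)), Cert [False, False, True, False, False, False, True] 3 (-20, -40, -40, -20) (8, 16, 4, -8)),
   (((-1, -1, 1, 1), (1, 2, 1, 1), (-1, -1, -2, -1), (1, 1, -1, -1)), (-1, -1, -1, 0), (-1, -2, -2, 0), ((-1, -1, -1, 0), (0, 1, 0, 0), (1, 0, 0, 0), (0, 0, -1, -1)), (1, 1, 0, 0), (6, 6, 0, -2), ((1, 1, 0, 0), (0, 0, 1, 0), (0, 1, 0, 0), (0, 0, -1, -1)), Cert [False, False, False, True] 3 (-10, 0, 10, 10) (-2, -2, -4, -2)),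
   (((0, 1, 1, 0), (0, 1, 0, 0), (0, 0, 0, 1), (0, 0, -1, -1)), (-1, -1, 1, 1), (0, 0, 1, 1), ((-1, -1, 1, 1), (1, 2, 1, 1), (-1, -1, -2, -1), (1, 1, -1, -1)), (-1, -1, -2, -1), (-2, -2, -4, -2), ((-1, -1, -2, -1), (1, 2, 2, 0), (1, 1, -1, -1), (1, 0, -1, 0)), Cert [False, False, False, True, False] 2 (2, 6, 2, 0) (0, -2, 0, 0)),
   (((-1, 0, 0, 1), (2, 2, 1, 0), (0, -1, -2, -2), (1, 0, 0, -1)), (0, -1, 0, 1), (-1, -2, -1, -1), ((0, -1, 0, 1), (1, 1, -1, -1), (1, 1, -1, -1), (1, 0, -1, 0)), (1, 1, 0, 0), (6, 6, 0, -2), ((1, 1, 0, 0), (0, 1, 0, 0), (0, 0, 1, 0), (0, 0, -1, -1)), Cert [False, False, True, False, False, False, True] 3 (-60, -140, -140, -60) (8, 16, 4, -8)),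
   (((0, -1, 0, 1), (1, 1, -1, -1), (1, 1, -1, -1), (1, 0, -1, 0)), (-1, -1, -2, -1), (-1, -1, -2, -1), ((-1, -1, -2, -1), (1, 1, -1, -1), (1, 2, 2, 0), (1, 0, -1, 0)), (1, 1, 0, 0), (6, 6, 0, -2), ((1, 1, 0, 0), (1, 0, 0, 0), (0, 0, 0, 1), (0, 0, -1, -1)), Cert [True, False, False, False, True, False, False] 0 (-40, -60, -20, 20) (4, 8, 4, 4)),
   (((-1, 0, 0, 1), (0, -1, -2, -2), (2, 2, 1, 0), (1, 0, 0, -1)), (-1, -2, -1, -1), (-1, -2, -1, -1), ((-1, -2, -1, -1), (0, -1, -2, -2), (0, 2, 2, 1), (1, 0, 0, -1)), (1, 0, -1, -1), (2, 0, -6, -6), ((1, 0, -1, -1), (0, -1, -1, -1), (-1, -1, -1, 0), (1, 1, 0, -1)), Cert [False, False, False] 3 (1, -3, -7, -6) (0, 1, 1, 0)),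
   (((-1, -1, 1, 1), (-1, -1, -2, -1), (1, 2, 1, 1), (1, 1, -1, -1)), (-1, -2, -2, 0), (-1, -2, -2, 0), ((-1, -2, -2, 0), (-1, -1, -2, -1), (-1, 0, 1, 0), (1, 1, -1, -1)), (1, 0, -1, -1), (2, 0, -6, -6), ((1, 0, -1, -1), (-1, -1, -1, 0), (0, -1, -1, -1), (1, 1, 0, -1)), Cert [False, False, True, False, False, False] 3 (-10, -20, -20, -10) (0, 2, 0, -2)),
   (((0, 0, 1, 1), (0, 0, 0, 1), (0, 0, 1, 0), (0, 0, -1, -1)), (-1, -1, -1, 0), (-1, -1, -1, 0), ((-1, -1, -1, 0), (0, 0, 0, 1), (0, 0, 0, 1), (0, 0, -1, -1)), (1, 0, -1, 0), (2, 0, -2, 0), ((1, 0, -1, 0), (-1, -1, 1, 1), (0, -1, -2, -2), (1, 0, 0, -1)), Cert [True] 0 (6, 6, 0, -2) (-2, -2, -2, 0)),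
   (((-1, -2, -2, 0), (-1, 0, 1, 0), (-1, -1, -2, -1), (1, 1, -1, -1)), (0, -1, -1, -1), (0, -1, -2, -2), ((0, -1, -1, -1), (0, 0, 1, 0), (1, 0, 0, 0), (0, 0, -1, -1)), (0, 1, 1, 0), (2, 8, 8, 2), ((0, 1, 1, 0), (0, 0, 0, 1), (0, 1, 0, 0), (0, 0, -1, -1)), Cert [False, True, False, False, False] 2 (-10, -10, 0, 10) (0, 0, 0, -2)),
   (((0, 0, 1, 1), (0, 0, 1, 0), (0, 0, 0, 1), (0, 0, -1, -1)), (-1, -2, -2, 0), (-1, -1, -1, 0), ((-1, -2, -2, 0), (-1, 0, 1, 0), (-1, -1, -2, -1), (1, 1, -1, -1)), (1, 0, 0, -1), (2, 0, 0, -2), ((1, 0, 0, -1), (0, 1, 2, 2), (1, 1, -1, -1), (1, 0, -1, 0)), Cert [True, False, False, False, True, False, False] 0 (-8, -16, -4, 8) (4, 8, 4, 4)),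
   (((-1, -2, -1, -1), (0, 2, 2, 1), (0, -1, -2, -2), (1, 0, 0, -1)), (-1, -1, -2, -1), (1, 0, -1, 0), ((-1, -1, -2, -1), (1, 2, 2, 0), (1, 1, -1, -1), (1, 0, -1, 0)), (0, 1, 1, 0), (2, 8, 8, 2), ((0, 1, 1, 0), (0, 0, 1, 0), (0, 0, 1, 0), (0, 0, -1, -1)), Cert [False, False, True, False, False, False] 3 (10, 20, 20, 10) (0, 2, 0, -2)),
   (((-1, -1, -2, -1), (1, 2, 2, 0), (1, 1, -1, -1), (1, 0, -1, 0)), (1, 0, 0, -1), (1, 0, 0, -1), ((1, 0, 0, -1), (1, 2, 2, 0), (1, 2, 2, 0), (1, 0, -1, 0)), (0, 1, 1, 0), (2, 8, 8, 2), ((0, 1, 1, 0), (0, 1, 0, 0), (0, 0, 0, 1), (0, 0, -1, -1)), Cert [False, False, False, True, False] 2 (10, 20, 10, 0) (0, -2, 0, 0)),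
   (((-1, -1, -2, -1), (1, 1, -1, -1), (1, 2, 2, 0), (1, 0, -1, 0)), (1, 0, 0, -1), (1, 0, 0, -1), ((1, 0, 0, -1), (1, 1, -1, -1), (0, 1, 2, 2), (1, 0, -1, 0)), (1, 1, 1, 0), (2, 6, 2, 0), ((1, 1, 1, 0), (1, 0, -1, -1), (-1, -2, -2, -1), (1, 1, 0, 0)), Cert [False, True, False, False, False] 2 (-10, -10, 0, 10) (0, 0, 0, -2)),
   (((-1, -2, -1, -1), (0, -1, -2, -2), (0, 2, 2, 1), (1, 0, 0, -1)), (1, 0, -1, 0), (1, 0, -1, 0), ((1, 0, -1, 0), (0, -1, -2, -2), (-1, -1, 1, 1), (1, 0, 0, -1)), (1, 1, 0, 0), (2, 2, 0, -4), ((1, 1, 0, 0), (0, -1, -2, -1), (0, -1, -2, -1), (1, 1, 1, 0)), Cert [False, False, True, False, False, False, True] 3 (60, 140, 140, 60) (8, 16, 4, -8)),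
   (((1, 0, -1, -1), (0, -1, -1, -1), (-1, -1, -1, 0), (1, 1, 0, -1)), (2, 2, 1, 0), (1, 2, 1, 0), ((2, 2, 1, 0), (-1, -1, -2, -1), (-1, -1, -2, -1), (1, 1, -1, -1)), (-1, 0, 0, 1), (-2, -2, 2, 2), ((-1, 0, 0, 1), (0, -1, -2, -2), (2, 2, 1, 0), (1, 0, 0, -1)), Cert [False, False, False, True] 3 (6, 0, -8, -8) (-2, -2, -4, -2)),
   (((-1, -2, -2, 0), (-1, -1, -2, -1), (-1, 0, 1, 0), (1, 1, -1, -1)), (1, 0, -1, -1), (0, -1, -2, -2), ((1, 0, -1, -1), (0, -1, -1, -1), (-1, -1, -1, 0), (1, 1, 0, -1)), (1, 1, 1, 0), (2, 6, 2, 0), ((1, 1, 1, 0), (-1, -2, -2, -1), (1, 0, -1, -1), (1, 1, 0, 0)), Cert [False, False, False, True, False] 2 (-10, -20, -10, 0) (0, -2, 0, 0)),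
   (((1, 0, -1, -1), (-1, -1, -1, 0), (0, -1, -1, -1), (1, 1, 0, -1)), (1, 1, 0, 0), (1, 2, 1, 0), ((1, 1, 0, 0), (0, 0, 0, 1), (1, 0, 0, 0), (0, 0, -1, -1)), (-1, -1, 1, 1), (-4, -2, 2, 4), ((-1, -1, 1, 1), (-1, -1, -2, -1), (1, 2, 1, 1), (1, 1, -1, -1)), Cert [False, False, True, False, False, False, True] 3 (40, 100, 100, 40) (8, 16, 4, -8)),
   (((-1, -1, -1, 0), (0, 0, 0, 1), (0, 0, 0, 1), (0, 0, -1, -1)), (1, 0, -1, -1), (0, -1, -1, -1), ((1, 0, -1, -1), (-1, -1, -1, 0), (0, -1, -1, -1), (1, 1, 0, -1)), (1, 2, 1, 1), (2, 4, 2, 2), ((1, 2, 1, 1), (-2, -2, -1, 0), (1, 1, -1, -1), (1, 0, -1, 0)), Cert [False, False, False] 3 (0, -1, -2, -2) (0, 1, 1, 0)),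
   (((1, 0, -1, 0), (-1, -1, 1, 1), (0, -1, -2, -2), (1, 0, 0, -1)), (1, 0, 0, -1), (0, 1, 0, -1), ((1, 0, 0, -1), (0, 1, 2, 2), (1, 1, -1, -1), (1, 0, -1, 0)), (0, 0, 1, 1), (-2, 0, 6, 6), ((0, 0, 1, 1), (0, 0, 0, 1), (0, 0, 1, 0), (0, 0, -1, -1)), Cert [] 0 (5, 5, 0, -5) (0, 1, 0, 0)),
   (((1, 0, 0, -1), (0, 1, 2, 2), (1, 1, -1, -1), (1, 0, -1, 0)), (1, 2, 1, 1), (1, 2, 1, 1), ((1, 2, 1, 1), (0, 1, 2, 2), (1, 2, 2, 0), (1, 0, -1, 0)), (0, 0, 1, 1), (-2, 0, 6, 6), ((0, 0, 1, 1), (0, 0, 1, 0), (0, 0, 0, 1), (0, 0, -1, -1)), Cert [True, False, False, False, True, False, False, True] 0 (320, 440, 160, -120) (24, 48, 32, 16)),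
   (((1, 0, 0, -1), (1, 2, 2, 0), (1, 2, 2, 0), (1, 0, -1, 0)), (1, 2, 1, 1), (1, 2, 1, 1), ((1, 2, 1, 1), (1, 2, 2, 0), (0, 1, 2, 2), (1, 0, -1, 0)), (0, 1, 1, 1), (0, 2, 6, 2), ((0, 1, 1, 1), (1, 2, 1, 0), (-1, -2, -2, -1), (1, 1, 0, 0)), Cert [False, False, False, True] 3 (-10, 0, 10, 10) (-2, -2, -4, -2)),
   (((1, 0, 0, -1), (1, 1, -1, -1), (0, 1, 2, 2), (1, 0, -1, 0)), (0, 1, 1, 1), (1, 2, 1, 1), ((0, 1, 1, 1), (1, 2, 1, 0), (-1, -2, -2, -1), (1, 1, 0, 0)), (1, 1, -1, -1), (6, 2, -2, -6), ((0, 0, 0, 0), (1, 1, -1, -1), (0, -1, -2, -2), (0, 0, 0, 0)), Cert [True] 0 (-20, -20, 0, 10) (-2, -2, -2, 0)),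
   (((1, 1, 1, 0), (1, 0, -1, -1), (-1, -2, -2, -1), (1, 1, 0, 0)), (1, 1, 2, 1), (0, 1, 1, 1), ((1, 1, 2, 1), (0, -1, -2, -2), (0, -1, -2, -2), (1, 0, 0, -1)), (-1, -1, -2, -1), (0, -4, -4, -2), ((-1, -1, -2, -1), (1, 1, -1, -1), (1, 2, 2, 0), (1, 0, -1, 0)), Cert [False, True, False, False, False] 2 (8, 8, 0, -6) (0, 0, 0, -2)),
   (((1, 0, -1, 0), (0, -1, -2, -2), (-1, -1, 1, 1), (1, 0, 0, -1)), (1, 1, 1, 0), (0, 1, 0, -1), ((1, 1, 1, 0), (1, 0, -1, -1), (-1, -2, -2, -1), (1, 1, 0, 0)), (0, -1, -2, -2), (4, -2, -8, -4), ((0, 0, 0, 0), (0, -1, -2, -2), (1, 1, -1, -1), (0, 0, 0, 0)), Cert [True, False, False, False, True, False, False] 0 (40, 60, 20, -20) (4, 8, 4, 4)),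
   (((1, 1, 0, 0), (0, -1, -2, -1), (0, -1, -2, -1), (1, 1, 1, 0)), (1, 1, 1, 0), (0, 1, 1, 0), ((1, 1, 1, 0), (-1, -2, -2, -1), (1, 0, -1, -1), (1, 1, 0, 0)), (-1, -2, -1, -1), (-2, -4, -4, 0), ((-1, -2, -1, -1), (0, -1, -2, -2), (0, 2, 2, 1), (1, 0, 0, -1)), Cert [False, False, True, False, False, False] 3 (-6, -14, -14, -6) (0, 2, 0, -2)),
   (((1, 1, 1, 0), (-1, -2, -2, -1), (1, 0, -1, -1), (1, 1, 0, 0)), (1, 2, 1, 1), (0, 1, 1, 1), ((1, 2, 1, 1), (-2, -2, -1, 0), (1, 1, -1, -1), (1, 0, -1, 0)), (-1, -2, -2, 0), (-4, -8, -6, -2), ((-1, -2, -2, 0), (-1, -1, -2, -1), (-1, 0, 1, 0), (1, 1, -1, -1)), Cert [False, False, False, True, False] 2 (-8, -14, -8, 0) (0, -2, 0, 0)),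
   (((1, 2, 1, 1), (-2, -2, -1, 0), (1, 1, -1, -1), (1, 0, -1, 0)), (-1, 0, 1, 0), (-1, 0, 1, 0), ((-1, 0, 1, 0), (-2, -2, -1, 0), (1, 2, 2, 0), (1, 0, -1, 0)), (-1, -1, -1, 0), (-6, -8, -6, 0), ((-1, -1, -1, 0), (0, 0, 0, 1), (0, 0, 0, 1), (0, 0, -1, -1)), Cert [False, False, False, True] 3 (10, 0, -10, -10) (-2, -2, -4, -2)),
   (((1, 2, 1, 1), (0, 1, 2, 2), (1, 2, 2, 0), (1, 0, -1, 0)), (2, 0, 0, 0), (-1, 0, 1, 0), ((2, 0, 0, 0), (0, 0, -2, -2), (0, 0, -2, -2), (-2, 0, 0, 0)), (-1, -1, 0, 0), (-2, -2, 0, 4), ((-1, -1, 0, 0), (0, 1, 2, 1), (-1, -2, -2, -1), (1, 1, 0, 0)), Cert [] 1 (-5, -10, -5, 0) (0, 0, 1, 0)),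
   (((1, 2, 1, 1), (1, 2, 2, 0), (0, 1, 2, 2), (1, 0, -1, 0)), (-1, -1, 0, 0), (-1, 0, 1, 0), ((-1, -1, 0, 0), (0, 1, 2, 1), (-1, -2, -2, -1), (1, 1, 0, 0)), (1, 2, 2, 0), (6, 12, 8, 4), ((0, 0, 0, 0), (1, 2, 2, 0), (0, -1, -2, -2), (0, 0, 0, 0)), Cert [True, False, False, False, True, False, False] 1 (-40, -80, -60, -20) (-4, 0, 4, 0)),
   (((0, 1, 1, 1), (1, 2, 1, 0), (-1, -2, -2, -1), (1, 1, 0, 0)), (-1, 0, 0, 1), (-1, -1, 0, 0), ((-1, 0, 0, 1), (2, 2, 1, 0), (0, -1, -2, -2), (1, 0, 0, -1)), (1, 0, 0, -1), (2, 2, -2, -2), ((1, 0, 0, -1), (1, 2, 2, 0), (1, 2, 2, 0), (1, 0, -1, 0)), Cert [False, False, False] 3 (-1, 2, 5, 4) (0, 1, 1, 0)),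
   (((0, 0, 0, 0), (1, 1, -1, -1), (0, -1, -2, -2), (0, 0, 0, 0)), (0, -1, -2, -2), (1, 1, -1, -1), ((0, 0, 0, 0), (0, -1, -2, -2), (1, 1, -1, -1), (0, 0, 0, 0)), (1, 0, 0, -1), (2, 2, -2, -2), ((1, 0, 0, -1), (1, 1, -1, -1), (0, 1, 2, 2), (1, 0, -1, 0)), Cert [] 0 (-4, -4, 0, 3) (0, 1, 0, 0)),
   (((0, 0, 0, 0), (0, -1, -2, -2), (1, 1, -1, -1), (0, 0, 0, 0)), (0, -1, -2, -2), (0, -1, -2, -2), ((0, 0, 0, 0), (0, -1, -2, -2), (1, 2, 2, 0), (0, 0, 0, 0)), (1, 0, -1, 0), (0, -2, -4, -4), ((1, 0, -1, 0), (0, -1, -2, -2), (-1, -1, 1, 1), (1, 0, 0, -1)), Cert [True, False, False, False, True, False, False, True] 0 (-240, -320, -120, 80) (24, 48, 32, 16)),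
   (((-1, 0, 1, 0), (-2, -2, -1, 0), (1, 2, 2, 0), (1, 0, -1, 0)), (0, -1, 0, 1), (0, -1, 0, 1), ((0, -1, 0, 1), (-2, -2, -1, 0), (0, 1, 2, 2), (1, 0, -1, 0)), (0, -1, -1, 0), (-4, -6, -6, -4), ((0, -1, -1, 0), (-1, -1, 0, 1), (-1, -2, -2, -1), (1, 1, 0, 0)), Cert [True, False, False, False, True, False, False] 1 (40, 80, 60, 20) (-4, 0, 4, 0)),
   (((2, 0, 0, 0), (0, 0, -2, -2), (0, 0, -2, -2), (-2, 0, 0, 0)), (0, -1, -1, 0), (0, 2, 0, 0), ((0, -1, -1, 0), (-1, -1, 0, 1), (-1, -2, -2, -1), (1, 1, 0, 0)), (-1, 0, 0, 0), (8, 0, -4, -4), ((0, 0, 0, 0), (-1, 0, 0, 0), (1, 0, 0, 0), (0, 0, 0, 0)), InH),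
   (((-1, -1, 0, 0), (0, 1, 2, 1), (-1, -2, -2, -1), (1, 1, 0, 0)), (-1, -2, -1, -1), (0, -1, -1, 0), ((-1, -2, -1, -1), (0, 2, 2, 1), (0, -1, -2, -2), (1, 0, 0, -1)), (1, 2, 1, 1), (2, 4, 4, 0), ((1, 2, 1, 1), (0, 1, 2, 2), (1, 2, 2, 0), (1, 0, -1, 0)), Cert [True] 1 (-14, -22, -14, 0) (0, -2, -2, -2)),
   (((0, 0, 0, 0), (1, 2, 2, 0), (0, -1, -2, -2), (0, 0, 0, 0)), (1, 1, -1, -1), (1, 2, 2, 0), ((0, 0, 0, 0), (1, 1, -1, -1), (0, -1, -2, -2), (0, 0, 0, 0)), (1, 2, 1, 1), (2, 4, 4, 0), ((1, 2, 1, 1), (1, 2, 2, 0), (0, 1, 2, 2), (1, 0, -1, 0)), Cert [True, False, False, False, True, False, False, True] 1 (200, 400, 320, 80) (-16, 8, 32, 16)),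
   (((0, 0, 0, 0), (0, -1, -2, -2), (1, 2, 2, 0), (0, 0, 0, 0)), (-1, 0, 0, 0), (0, -1, -2, -2), ((0, 0, 0, 0), (-1, 0, 0, 0), (1, 0, 0, 0), (0, 0, 0, 0)), (0, -1, 0, 1), (0, -2, -4, -4), ((0, -1, 0, 1), (-2, -2, -1, 0), (0, 1, 2, 2), (1, 0, -1, 0)), Cert [] 1 (4, 7, 4, 0) (0, 0, 1, 0)),
   (((0, -1, 0, 1), (-2, -2, -1, 0), (0, 1, 2, 2), (1, 0, -1, 0)), (1, 1, 0, 0), (-1, -1, -2, -1), ((1, 1, 0, 0), (0, -1, -2, -1), (0, -1, -2, -1), (1, 1, 1, 0)), (0, -1, -2, -2), (-4, -8, -2, 4), ((0, 0, 0, 0), (0, -1, -2, -2), (1, 2, 2, 0), (0, 0, 0, 0)), Cert [True] 1 (20, 30, 20, 0) (0, -2, -2, -2)),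
   (((0, -1, -1, 0), (-1, -1, 0, 1), (-1, -2, -2, -1), (1, 1, 0, 0)), (1, 0, -1, 0), (0, 0, -1, -1), ((1, 0, -1, 0), (-1, -1, 1, 1), (0, -1, -2, -2), (1, 0, 0, -1)), (-1, 0, 1, 0), (0, 2, 4, 4), ((-1, 0, 1, 0), (-2, -2, -1, 0), (1, 2, 2, 0), (1, 0, -1, 0)), Cert [True, False, False, False, True, False, False, True] 1 (-200, -400, -320, -80) (-16, 8, 32, 16)),
   (((0, 0, 0, 0), (-1, 0, 0, 0), (1, 0, 0, 0), (0, 0, 0, 0)), (1, 2, 2, 0), (-1, 0, 0, 0), ((0, 0, 0, 0), (1, 2, 2, 0), (0, -1, -2, -2), (0, 0, 0, 0)), (2, 0, 0, 0), (-2, 0, 0, 0), ((2, 0, 0, 0), (0, 0, -2, -2), (0, 0, -2, -2), (-2, 0, 0, 0)), InH)]"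

definition reps :: "m4 list" where "reps = map fst data"

lemma data_ok: "I4 \<in> set reps \<and> list_all (chk_row reps) data"
  by code_simp

fun app :: "'a::field mat2 \<Rightarrow> 'a \<times> 'a \<Rightarrow> 'a \<times> 'a" where
  "app (a,b,c,d) (x,y) = (a*x + b*y, c*x + d*y)"

fun det2 :: "'a::field mat2 \<Rightarrow> 'a" where
  "det2 (a,b,c,d) = a*d - b*c"

fun adjm :: "'a::field mat2 \<Rightarrow> 'a mat2" where
  "adjm (a,b,c,d) = (d, -b, -c, a)"

fun ffp :: "'a::field \<times> 'a \<Rightarrow> 'a" where
  "ffp (x,y) = x^11*y + 11*x^6*y^6 - x*y^11"

fun hhp :: "'a::field \<times> 'a \<Rightarrow> 'a" where
  "hhp (x,y) = x^20 - 228*x^15*y^5 + 494*x^10*y^10 + 228*x^5*y^15 + y^20"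

definition Pj :: "'a::field \<Rightarrow> 'a \<times> 'a \<Rightarrow> bool" where
  "Pj j v \<longleftrightarrow> v \<noteq> (0,0) \<and> hhp v ^ 3 + j * ffp v ^ 5 = 0"

lemma app_mmul: "app (mmul A B) v = app A (app B v)"
  by (cases A; cases B; cases v) (simp add: algebra_simps)

lemma det_mmul: "det2 (mmul A B) = det2 A * det2 B"
  by (cases A; cases B) (simp add: algebra_simps)

lemma app_smul: "app (smul2 k A) v = (k * fst (app A v), k * snd (app A v))"
  by (cases A; cases v) (simp add: algebra_simps)

lemma app_adj: "app (adjm A) (app A v) = (det2 A * fst v, det2 A * snd v)"
  by (cases A; cases v) (simp add: algebra_simps)

lemma app_scale: "app A (c*x, c*y) = (c * fst (app A (x,y)), c * snd (app A (x,y)))"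
  by (cases A) (simp add: algebra_simps)

lemma mmul_smul_left: "mmul (smul2 k A) B = smul2 k (mmul A B)"
  by (cases A; cases B) (simp add: algebra_simps)

lemma mmul_smul_right: "mmul A (smul2 k B) = smul2 k (mmul A B)"
  by (cases A; cases B) (simp add: algebra_simps)

lemma smul2_smul2: "smul2 a (smul2 b A) = smul2 (a*b) A"
  by (cases A) (simp add: algebra_simps)

lemma smul2_one: "smul2 1 A = A"
  by (cases A) simp

lemma smul2_cancel:
  fixes a b :: "'a::field"
  assumes "smul2 a A = smul2 b B" "a \<noteq> 0"
  shows "A = smul2 (b / a) B"
proof -
  have "A = smul2 (1/a) (smul2 a A)" using assms(2) by (simp add: smul2_smul2 smul2_one)
  also have "\<dots> = smul2 (b/a) B" using assms(1) by (simp add: smul2_smul2)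
  finally show ?thesis .
qed

lemma ffp_scale: "ffp (c*x, c*y) = c^12 * ffp (x,y)"
  unfolding ffp.simps by algebra

lemma hhp_scale: "hhp (c*x, c*y) = c^20 * hhp (x,y)"
  unfolding hhp.simps by algebra

lemma Pj_scale:
  fixes c :: "'a::field"
  assumes "c \<noteq> 0" "Pj j (c*x, c*y)" shows "Pj j (x,y)"
proof -
  have "hhp (c*x, c*y) ^ 3 + j * ffp (c*x, c*y) ^ 5 = c^60 * (hhp (x,y) ^ 3 + j * ffp (x,y) ^ 5)"
  proof -
    have e: "\<And>A B. (c^20*A)^3 + j*(c^12*B)^5 = c^60*(A^3 + j*B^5)" by algebra
    show ?thesis by (simp only: ffp_scale hhp_scale e)
  qed
  with assms show ?thesis unfolding Pj_def by auto
qed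

lemma Pj_y: assumes "Pj j (x,y)" shows "y \<noteq> 0"
proof
  assume "y = 0"
  with assms have "x^60 = 0" "x \<noteq> 0" unfolding Pj_def by (simp_all flip: power_mult)
  then show False by simp
qed

lemma Pj_app:
  fixes M :: "'a::field mat2"
  assumes "det2 M \<noteq> 0" "ffp (app M v) = det2 M ^ 6 * ffp v" "hhp (app M v) = det2 M ^ 10 * hhp v"
    and "Pj j v"
  shows "Pj j (app M v)"
proof -
  have "app M v \<noteq> (0,0)"
  proof
    assume h: "app M v = (0,0)"
    have "app (adjm M) (app M v) = (0,0)" unfolding h by (cases M) simp
    then have "(det2 M * fst v, det2 M * snd v) = (0,0)" by (simp only: app_adj)
    with assms(1) have "v = (0,0)" by (cases v) simp
    with assms(4) show False unfolding Pj_def by simp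
  qed
  moreover have "hhp (app M v) ^ 3 + j * ffp (app M v) ^ 5 = det2 M ^ 30 * (hhp v ^ 3 + j * ffp v ^ 5)"
    unfolding assms(2,3) by (simp add: algebra_simps power_mult_distrib flip: power_mult)
  ultimately show ?thesis using assms(4) unfolding Pj_def by simp
qed

lemma ffT:
  fixes q x y :: "'a::field" assumes "q^2 = 2*q + 4"
  shows "(-q*x+2*y)^11*(2*x+q*y) + 11*(-q*x+2*y)^6*(2*x+q*y)^6 - (-q*x+2*y)*(2*x+q*y)^11 = (-q*q - 2*2)^6 * (x^11*y + 11*x^6*y^6 - x*y^11)"
  using assms by algebra

lemma hhT:
  fixes q x y :: "'a::field" assumes "q^2 = 2*q + 4"
  shows "(-q*x+2*y)^20 - 228*(-q*x+2*y)^15*(2*x+q*y)^5 + 494*(-q*x+2*y)^10*(2*x+q*y)^10 + 228*(-q*x+2*y)^5*(2*x+q*y)^15 + (2*x+q*y)^20 = (-q*q-2*2)^10 * (x^20 - 228*x^15*y^5 + 494*x^10*y^10 + 228*x^5*y^15 + y^20)"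
  using assms by algebra

lemma aux_det: fixes s :: "'a::field" assumes "s*s = 5" "-(1+s)*(1+s) - 2*2 = 0" shows "(80::'a) = 0"
proof -
  have "(80::'a) = 2*(s-5)*(-(1+s)*(1+s) - 2*2) + (2*s-6)*(s*s - 5)" by algebra
  then show ?thesis using assms by simp
qed

type_synonym tz = "z4 \<times> z4"

fun tadd :: "tz \<Rightarrow> tz \<Rightarrow> tz" where
  "tadd (u,v) (u',v') = (zadd u u', zadd v v')"

fun tmul :: "tz \<Rightarrow> tz \<Rightarrow> tz \<Rightarrow> tz" where
  "tmul (m1,m0) (u,v) (u',v') =
     (zadd (zadd (zmul u v') (zmul v u')) (zmul (zmul u u') m1),
      zadd (zmul v v') (zmul (zmul u u') m0))"

fun te :: "'a::field \<Rightarrow> 'a \<Rightarrow> tz \<Rightarrow> 'a" where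
  "te z t (u,v) = ze z u * t + ze z v"

fun teval :: "tz \<Rightarrow> int list \<Rightarrow> tz" where
  "teval m [] = ((0,0,0,0),(0,0,0,0))"
| "teval m (c # cs) = tadd ((0,0,0,0),(c,0,0,0)) (tmul m ((1,0,0,0),(0,0,0,0)) (teval m cs))"

fun hor :: "int list \<Rightarrow> 'a::field \<Rightarrow> 'a" where
  "hor [] t = 0"
| "hor (c # cs) t = of_int c + t * hor cs t"

fun tnz :: "tz \<Rightarrow> tz \<Rightarrow> bool" where
  "tnz m (u,v) = (case tmul m (u,v) (zneg u, zadd v (zmul u (fst m))) of (a, b) \<Rightarrow>
      a = (0,0,0,0) \<and> nzc b)"

definition hl :: "int list" where
  "hl = [1,0,0,0,0,228,0,0,0,0,494,0,0,0,0,-228,0,0,0,0,1]"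

definition fl :: "int list" where
  "fl = [0,-1,0,0,0,0,11,0,0,0,0,1]"

definition mR :: tz where "mR = ((-1,-1,0,1),(0,1,0,0))"
definition mU :: tz where "mU = ((0,0,0,0),(-1,0,0,0))"

lemma r3chk: "teval mR hl = ((0,0,0,0),(0,0,0,0)) \<and> tnz mR (teval mR fl)"
  by code_simp

lemma uchk: "tadd (tmul mU (teval mU hl) (tmul mU (teval mU hl) (teval mU hl)))
    (tmul mU ((0,0,0,0),(1728,0,0,0)) (tmul mU (teval mU fl) (tmul mU (teval mU fl)
      (tmul mU (teval mU fl) (tmul mU (teval mU fl) (teval mU fl)))))) = ((0,0,0,0),(0,0,0,0))
   \<and> tnz mU (teval mU fl)"
  by code_simp

lemma hhp_hor: "hhp (t,1) = hor hl t"
  by (simp add: hl_def) algebra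

lemma ffp_hor: "ffp (t,1) = hor fl t"
  by (simp add: fl_def) algebra

lemma mob_smul:
  fixes k :: "'a::field"
  assumes k: "k \<noteq> 0" shows "mob_app (smul2 k A) x = mob_app A x"
proof -
  obtain a b c d where fields: "A = (a,b,c,d)" by (rule prod_cases4)
  have e1: "k*c*x + k*d = k*(c*x+d)" and e2: "k*a*x + k*b = k*(a*x+b)" by (simp_all add: algebra_simps)
  show ?thesis using k unfolding fields by (simp add: e1 e2)
qed

locale icos =
  fixes l :: nat and z j a1 :: "'a::field"
  assumes lprime: "prime l" and lmod: "l mod 5 = 4" and charl: "of_nat l = (0::'a)"
    and z5: "z^5 = 1" and z1: "z \<noteq> 1"
    and j0: "j \<noteq> 0" and j1728: "j \<noteq> 1728"
    and a1F: "a1 \<in> Fprime" and Gz: "Gpol (a1^5) j = 0"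
begin

lemma cyc: "z^4 + z^3 + z^2 + z + 1 = 0"
proof -
  have "(z - 1) * (z^4 + z^3 + z^2 + z + 1) = z^5 - 1" by algebra
  then have "(z - 1) * (z^4 + z^3 + z^2 + z + 1) = 0" using z5 by simp
  with z1 show ?thesis by simp
qed

lemma z0: "z \<noteq> 0" using z5 by auto

lemma CHAR_l: "CHAR('a) = l"
proof -
  have "CHAR('a) dvd l" using charl of_nat_eq_0_iff_char_dvd by blast
  moreover have "\<forall>m. m dvd l \<longrightarrow> m = 1 \<or> m = l" using lprime unfolding prime_nat_iff by simp
  ultimately have "CHAR('a) = 1 \<or> CHAR('a) = l" by blast
  moreover have "CHAR('a) \<noteq> 1" using CHAR_not_1 by simp
  ultimately show ?thesis by blast
qed

lemma int_nz: assumes "good n" shows "(of_int n :: 'a) \<noteq> 0"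
proof
  assume "(of_int n :: 'a) = 0"
  then have "int CHAR('a) dvd n" by (simp add: of_int_eq_0_iff_char_dvd)
  then have "int l dvd n" using CHAR_l by simp
  moreover have "n dvd int (2^20 * 5^20)" using assms unfolding good_def by simp
  ultimately have "int l dvd int (2^20 * 5^20)" by (rule dvd_trans)
  then have "l dvd 2^20 * 5^20" by (simp only: int_dvd_int_iff)
  then have "l dvd 2^20 \<or> l dvd 5^20" using lprime prime_dvd_mult_iff by blast
  then have "l dvd 2 \<or> l dvd 5" using lprime prime_dvd_power by blast
  then have "l \<le> 5" by (auto dest: dvd_imp_le)
  then have "l = 4" using lmod by presburger
  with \<open>l dvd 2 \<or> l dvd 5\<close> show False by simp
qed

lemma ze_zmul: "ze z (zmul a b) = ze z a * ze z b"
proof -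
  obtain p0 p1 p2 p3 where a: "a = (p0,p1,p2,p3)" by (rule prod_cases4)
  obtain q0 q1 q2 q3 where b: "b = (q0,q1,q2,q3)" by (rule prod_cases4)
  have c: "z^4 + z^3 + z^2 + z + 1 = 0" by (rule cyc)
  show ?thesis unfolding a b using c by (simp add: Let_def) algebra
qed

lemma ze_zadd: "ze z (zadd a b) = ze z a + ze z b"
proof -
  obtain p0 p1 p2 p3 where a: "a = (p0,p1,p2,p3)" by (rule prod_cases4)
  obtain q0 q1 q2 q3 where b: "b = (q0,q1,q2,q3)" by (rule prod_cases4)
  show ?thesis unfolding a b by (simp add: algebra_simps)
qed

lemma ze_zneg: "ze z (zneg a) = - ze z a"
proof -
  obtain p0 p1 p2 p3 where a: "a = (p0,p1,p2,p3)" by (rule prod_cases4)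
  show ?thesis unfolding a by (simp add: algebra_simps)
qed

lemma me_mmul4: "me z (mmul4 A B) = mmul (me z A) (me z B)"
proof -
  obtain a b c d where A: "A = (a,b,c,d)" by (rule prod_cases4)
  obtain e f g h where B: "B = (e,f,g,h)" by (rule prod_cases4)
  show ?thesis unfolding A B by (simp add: ze_zmul ze_zadd)
qed

lemma me_smul4: "me z (smul4 k A) = smul2 (ze z k) (me z A)"
proof -
  obtain a b c d where A: "A = (a,b,c,d)" by (rule prod_cases4)
  show ?thesis unfolding A by (simp add: ze_zmul)
qed

lemma me_adj4: "me z (adj4 A) = adjm (me z A)"
proof -
  obtain a b c d where A: "A = (a,b,c,d)" by (rule prod_cases4)
  show ?thesis unfolding A by (simp add: ze_zneg)
qed

lemma nzc_ne0: assumes "nzc k" shows "ze z k \<noteq> 0"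
proof -
  obtain n a b c where e: "zmul k (zcof k) = (n,a,b,c)" by (rule prod_cases4)
  have "a = 0 \<and> b = 0 \<and> c = 0 \<and> good n" using assms by (simp only: nzc.simps e prod.case)
  then have abc: "a = 0" "b = 0" "c = 0" and g: "good n" by blast+
  have "ze z k * ze z (zcof k) = ze z (zmul k (zcof k))" by (rule ze_zmul[symmetric])
  also have "\<dots> = ze z (n,a,b,c)" by (simp only: e)
  also have "\<dots> = of_int n" by (simp add: abc)
  finally have "ze z k * ze z (zcof k) = of_int n" .
  with int_nz[OF g] show ?thesis by auto
qed

lemma s2: "sqrt5 z ^ 2 = 5"
  unfolding sqrt5_def using cyc by algebra

lemma me_I4: "me z I4 = Imat" by (simp add: I4_def Imat_def)
lemma me_S4: "me z S4 = Smat z" by (simp add: S4_def Smat_def)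
lemma me_U4: "me z U4 = Umat" by (simp add: U4_def Umat_def)
lemma me_T4: "me z T4 = Tmat z"
proof -
  have h1: "ze z (0,0,2,2) = -(1 + sqrt5 z)" unfolding sqrt5_def using cyc by simp algebra
  have h2: "ze z (0,0,-2,-2) = 1 + sqrt5 z" unfolding sqrt5_def using cyc by simp algebra
  show ?thesis unfolding T4_def Tmat_def by (simp only: me.simps h1 h2) simp
qed

lemma me_S24: "me z S24 = (z^2, 0, 0, 1)" by (simp add: S24_def)

lemma me_R34: "me z R34 = (ze z (-1,-1,-1,0), z, 1, ze z (0,0,-1,-1))" by (simp add: R34_def)

lemma fr_add: "(x + y) ^ l = x ^ l + (y::'a) ^ l"
  by (rule freshmans_dream) (simp_all add: CHAR_l lprime)

lemma fr_neg: "(- x) ^ l = - ((x::'a) ^ l)"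
  by (rule minus_power_prime_CHAR) (simp_all add: CHAR_l lprime)

lemma l_pos: "l > 0" using lprime prime_gt_0_nat by blast

lemma fr_nat: "(of_nat n :: 'a) ^ l = of_nat n"
proof (induction n)
  case 0 then show ?case using l_pos by simp
next
  case (Suc n)
  have "(of_nat (Suc n) :: 'a) ^ l = (1 + of_nat n) ^ l" by simp
  also have "\<dots> = 1 + of_nat n" by (simp only: fr_add Suc power_one)
  finally show ?case by simp
qed

lemma fr_int: "(of_int n :: 'a) ^ l = of_int n"
proof (cases "n \<ge> 0")
  case True
  then have "n = int (nat n)" by simp
  then show ?thesis using fr_nat[of "nat n"] by (metis of_int_of_nat_eq)
next
  case False
  then have "n = - int (nat (- n))" by simp
  then show ?thesis using fr_nat[of "nat (-n)"] fr_neg[of "of_nat (nat (-n))"] by (metis of_int_minus of_int_of_nat_eq)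
qed

lemma fr_F: "(x::'a) \<in> Fprime \<Longrightarrow> x ^ l = x"
proof -
  assume "x \<in> Fprime"
  then obtain n where x: "x = of_int n" unfolding Fprime_def by auto
  show ?thesis unfolding x by (rule fr_int)
qed

lemma fr_z: "z ^ l = z ^ 4"
proof -
  have "l = 5 * (l div 5) + 4" using lmod by presburger
  then have "z ^ l = (z^5) ^ (l div 5) * z^4" by (metis power_add power_mult)
  then show ?thesis using z5 by simp
qed

lemma fr_ze: "(ze z A) ^ l = ze z (zconj A)"
proof -
  obtain p0 p1 p2 p3 where A: "A = (p0,p1,p2,p3)" by (rule prod_cases4)
  have q2: "(z^2)^l = (z^l)^2" and q3: "(z^3)^l = (z^l)^3" by (simp_all flip: power_mult add: mult.commute)
  have "(ze z A) ^ l = of_int p0 + of_int p1 * (z^l) + of_int p2 * (z^l)^2 + of_int p3 * (z^l)^3"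
    unfolding A ze.simps by (simp only: fr_add power_mult_distrib fr_int q2 q3)
  also have "\<dots> = ze z (zconj A)"
  proof -
    have z4: "z^4 = -(z^3+z^2+z+1)" using cyc by algebra
    have z8: "(z^4)^2 = z^3"
    proof -
      have "(z^4)^2 = z^5 * z^3" by (simp flip: power_add power_mult)
      then show ?thesis using z5 by simp
    qed
    have z12: "(z^4)^3 = z^2"
    proof -
      have "(z^4)^3 = (z^5)^2 * z^2" by (simp flip: power_add power_mult)
      then show ?thesis using z5 by simp
    qed
    show ?thesis unfolding A fr_z z8 z12 unfolding z4 by (simp add: algebra_simps)
  qed
  finally show ?thesis .
qed

lemma ffS: "ffp (app (Smat z) v) = z^6 * ffp v"
proof -
  obtain x y where v: "v = (x,y)" by (cases v)
  show ?thesis unfolding v Smat_def using z5 by simp algebra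
qed

lemma hhS: "hhp (app (Smat z) v) = z^10 * hhp v"
proof -
  obtain x y where v: "v = (x,y)" by (cases v)
  show ?thesis unfolding v Smat_def using z5 by simp algebra
qed

lemma ss: "sqrt5 z * sqrt5 z = 5" using s2 by (simp add: power2_eq_square)

lemma q6: "(1 + sqrt5 z) * (1 + sqrt5 z) = 6 + 2 * sqrt5 z"
  using ss by (simp add: algebra_simps)

lemma qT: "(1 + sqrt5 z)^2 = 2*(1 + sqrt5 z) + 4"
  unfolding power2_eq_square q6 by simp

lemma num_nz: "good (numeral k) \<Longrightarrow> (numeral k :: 'a) \<noteq> 0"
  using int_nz[of "numeral k"] by simp

lemma detT: "det2 (Tmat z) = -(1 + sqrt5 z)*(1 + sqrt5 z) - 2*2"
  by (simp add: Tmat_def)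

lemma ffT': "ffp (app (Tmat z) v) = det2 (Tmat z) ^ 6 * ffp v"
proof -
  obtain x y where v: "v = (x,y)" by (cases v)
  have "app (Tmat z) v = (-(1 + sqrt5 z)*x + 2*y, 2*x + (1 + sqrt5 z)*y)"
    unfolding v Tmat_def by simp
  then show ?thesis unfolding v by (simp only: ffp.simps detT ffT[OF qT])
qed

lemma hhT': "hhp (app (Tmat z) v) = det2 (Tmat z) ^ 10 * hhp v"
proof -
  obtain x y where v: "v = (x,y)" by (cases v)
  have "app (Tmat z) v = (-(1 + sqrt5 z)*x + 2*y, 2*x + (1 + sqrt5 z)*y)"
    unfolding v Tmat_def by simp
  then show ?thesis unfolding v by (simp only: hhp.simps detT hhT[OF qT])
qed

lemma detT_nz: "det2 (Tmat z) \<noteq> 0"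
proof
  assume "det2 (Tmat z) = 0"
  then have h: "-(1 + sqrt5 z)*(1 + sqrt5 z) - 2*2 = 0" unfolding detT .
  have "(80::'a) = 0" by (rule aux_det[OF ss h])
  moreover have "good 80" by (simp add: good_def)
  ultimately show False using num_nz by blast
qed

lemma G60_inv:
  assumes "M \<in> G60mats z"
  shows "det2 M \<noteq> 0 \<and> (\<forall>v. ffp (app M v) = det2 M ^ 6 * ffp v \<and> hhp (app M v) = det2 M ^ 10 * hhp v)"
  using assms
proof (induction rule: G60mats.induct)
  case G60_id
  have a: "\<And>v. app Imat v = v" by (case_tac v) (simp add: Imat_def)
  have d: "det2 (Imat :: 'a mat2) = 1" by (simp add: Imat_def)
  show ?case
  proof (intro conjI allI)
    show "det2 (Imat :: 'a mat2) \<noteq> 0" using d by simp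
  next
    fix v :: "'a \<times> 'a"
    show "ffp (app Imat v) = det2 Imat ^ 6 * ffp v" by (simp only: a d power_one mult_1_left)
    show "hhp (app Imat v) = det2 Imat ^ 10 * hhp v" by (simp only: a d power_one mult_1_left)
  qed
next
  case (G60_S M)
  have dS: "det2 (Smat z) = z" by (simp add: Smat_def)
  have I1: "det2 M \<noteq> 0" and I2: "\<And>v. ffp (app M v) = det2 M ^ 6 * ffp v"
    and I3: "\<And>v. hhp (app M v) = det2 M ^ 10 * hhp v" using G60_S.IH by blast+
  show ?case
  proof (intro conjI allI)
    show "det2 (mmul M (Smat z)) \<noteq> 0" using I1 z0 by (simp add: det_mmul dS)
  next
    fix v :: "'a \<times> 'a"
    show "ffp (app (mmul M (Smat z)) v) = det2 (mmul M (Smat z)) ^ 6 * ffp v"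
      by (simp only: app_mmul I2 ffS det_mmul dS power_mult_distrib mult.assoc)
    show "hhp (app (mmul M (Smat z)) v) = det2 (mmul M (Smat z)) ^ 10 * hhp v"
      by (simp only: app_mmul I3 hhS det_mmul dS power_mult_distrib mult.assoc)
  qed
next
  case (G60_T M)
  have I1: "det2 M \<noteq> 0" and I2: "\<And>v. ffp (app M v) = det2 M ^ 6 * ffp v"
    and I3: "\<And>v. hhp (app M v) = det2 M ^ 10 * hhp v" using G60_T.IH by blast+
  show ?case
  proof (intro conjI allI)
    show "det2 (mmul M (Tmat z)) \<noteq> 0" using I1 detT_nz by (simp add: det_mmul)
  next
    fix v :: "'a \<times> 'a"
    show "ffp (app (mmul M (Tmat z)) v) = det2 (mmul M (Tmat z)) ^ 6 * ffp v"
      by (simp only: app_mmul I2 ffT' det_mmul power_mult_distrib mult.assoc)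
    show "hhp (app (mmul M (Tmat z)) v) = det2 (mmul M (Tmat z)) ^ 10 * hhp v"
      by (simp only: app_mmul I3 hhT' det_mmul power_mult_distrib mult.assoc)
  qed
qed

lemma Pj_G60: "M \<in> G60mats z \<Longrightarrow> Pj j v \<Longrightarrow> Pj j (app M v)"
  using G60_inv Pj_app by blast

lemma word_G60: "me z (evalword w) \<in> G60mats z"
proof -
  have "\<And>A. me z A \<in> G60mats z \<Longrightarrow>
     me z (foldl (\<lambda>M b. mmul4 M (if b then T4 else S4)) A w) \<in> G60mats z"
  proof (induction w arbitrary: A)
    case Nil then show ?case by simp
  next
    case (Cons b w)
    have "me z (mmul4 A (if b then T4 else S4)) \<in> G60mats z"
      using Cons.prems by (cases b) (simp_all add: me_mmul4 me_T4 me_S4 G60mats.intros)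
    then show ?case using Cons.IH by simp
  qed
  note H = this
  show ?thesis unfolding evalword_def by (rule H) (simp add: me_I4 G60mats.G60_id)
qed

lemma row_ok:
  assumes "L \<in> set reps"
  obtains k1 k2 LS k1' k2' LT c where "chk_row reps (L,k1,k2,LS,k1',k2',LT,c)"
proof -
  from assms obtain r where r: "r \<in> set data" "fst r = L" unfolding reps_def by auto
  have "list_all (chk_row reps) data" using data_ok by blast
  with r(1) have cr: "chk_row reps r" by (simp only: list_all_iff)
  have rr0: "r = (fst r, fst (snd r), fst (snd (snd r)), fst (snd (snd (snd r))), fst (snd (snd (snd (snd r)))),
     fst (snd (snd (snd (snd (snd r))))), fst (snd (snd (snd (snd (snd (snd r)))))),
     snd (snd (snd (snd (snd (snd (snd r)))))))" by simp
  have rr: "r = (L, fst (snd r), fst (snd (snd r)), fst (snd (snd (snd r))), fst (snd (snd (snd (snd r)))),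
     fst (snd (snd (snd (snd (snd r))))), fst (snd (snd (snd (snd (snd (snd r)))))),
     snd (snd (snd (snd (snd (snd (snd r)))))))" using rr0 unfolding r(2) .
  have "chk_row reps (L, fst (snd r), fst (snd (snd r)), fst (snd (snd (snd r))), fst (snd (snd (snd (snd r)))),
     fst (snd (snd (snd (snd (snd r))))), fst (snd (snd (snd (snd (snd (snd r)))))),
     snd (snd (snd (snd (snd (snd (snd r)))))))" unfolding rr[symmetric] by (rule cr)
  then show ?thesis by (rule that)
qed

lemma step_rep:
  assumes "smul4 k1 (mmul4 L G) = smul4 k2 L'" "nzc k1" "nzc k2"
    and "M = smul2 k (me z L)" "k \<noteq> 0"
  shows "mmul M (me z G) = smul2 (k * (ze z k2 / ze z k1)) (me z L') \<and> k * (ze z k2 / ze z k1) \<noteq> 0"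
proof -
  have "me z (smul4 k1 (mmul4 L G)) = me z (smul4 k2 L')" using assms(1) by (rule arg_cong)
  then have "smul2 (ze z k1) (mmul (me z L) (me z G)) = smul2 (ze z k2) (me z L')"
    by (simp only: me_smul4 me_mmul4)
  then have e: "mmul (me z L) (me z G) = smul2 (ze z k2 / ze z k1) (me z L')"
    using nzc_ne0[OF assms(2)] by (rule smul2_cancel)
  have "mmul M (me z G) = smul2 k (mmul (me z L) (me z G))" unfolding assms(4) by (rule mmul_smul_left)
  also have "\<dots> = smul2 (k * (ze z k2 / ze z k1)) (me z L')" unfolding e by (rule smul2_smul2)
  finally show ?thesis using assms(5) nzc_ne0[OF assms(2)] nzc_ne0[OF assms(3)] by simp
qed

lemma G60_rep:
  assumes "M \<in> G60mats z"
  shows "\<exists>L\<in>set reps. \<exists>k. k \<noteq> 0 \<and> M = smul2 k (me z L)"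
  using assms
proof (induction rule: G60mats.induct)
  case G60_id
  have "Imat = smul2 1 (me z I4)" by (simp only: me_I4 smul2_one)
  moreover have "I4 \<in> set reps" using data_ok by blast
  ultimately show ?case by (intro bexI[of _ I4] exI[of _ 1]) simp_all
next
  case (G60_S M)
  then obtain L k where L: "L \<in> set reps" "k \<noteq> 0" "M = smul2 k (me z L)" by blast
  obtain k1 k2 LS k1' k2' LT c where "chk_row reps (L,k1,k2,LS,k1',k2',LT,c)"
    using row_ok[OF L(1)] by blast
  then have h: "smul4 k1 (mmul4 L S4) = smul4 k2 LS" "nzc k1" "nzc k2" "LS \<in> set reps"
    by (simp_all only: chk_row.simps)
  have "mmul M (me z S4) = smul2 (k * (ze z k2 / ze z k1)) (me z LS) \<and> k * (ze z k2 / ze z k1) \<noteq> 0"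
    by (rule step_rep[OF h(1-3) L(3) L(2)])
  note X = this[unfolded me_S4]
  then show ?case using h(4) by blast
next
  case (G60_T M)
  then obtain L k where L: "L \<in> set reps" "k \<noteq> 0" "M = smul2 k (me z L)" by blast
  obtain k1 k2 LS k1' k2' LT c where "chk_row reps (L,k1,k2,LS,k1',k2',LT,c)"
    using row_ok[OF L(1)] by blast
  then have h: "smul4 k1' (mmul4 L T4) = smul4 k2' LT" "nzc k1'" "nzc k2'" "LT \<in> set reps"
    by (simp_all only: chk_row.simps)
  have "mmul M (me z T4) = smul2 (k * (ze z k2' / ze z k1')) (me z LT) \<and> k * (ze z k2' / ze z k1') \<noteq> 0"
    by (rule step_rep[OF h(1-3) L(3) L(2)])
  note X = this[unfolded me_T4]
  then show ?case using h(4) by blast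
qed

end

lemma eig_quad_aux:
  fixes a b d t lam :: "'a::field"
  assumes "a*t + b = lam*t" "t + d = lam"
  shows "t^2 = (a - d)*t + b"
  using assms by algebra

lemma eig_quad:
  fixes a b d x y lam :: "'a::field"
  assumes "a*x + b*y = lam*x" "1*x + d*y = lam*y" "y \<noteq> 0"
  shows "(x/y)^2 = (a - d)*(x/y) + b"
proof -
  have e1: "a*(x/y) + b = lam*(x/y)"
  proof -
    have "a*(x/y) + b = (a*x + b*y)/y" using assms(3) by (simp add: field_simps)
    also have "\<dots> = lam*(x/y)" using assms(1) by simp
    finally show ?thesis .
  qed
  have e2: "x/y + d = lam"
  proof -
    have "x/y + d = (1*x + d*y)/y" using assms(3) by (simp add: field_simps)
    also have "\<dots> = lam" using assms(2,3) by simp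
    finally show ?thesis .
  qed
  show ?thesis by (rule eig_quad_aux[OF e1 e2])
qed

lemma tmul_aux:
  fixes A B C D e1 e0 t :: "'a::field"
  assumes "t^2 = e1*t + e0"
  shows "(A*D + B*C + A*C*e1)*t + (B*D + A*C*e0) = (A*t+B)*(C*t+D)"
  using assms by algebra

lemma Pj_div:
  fixes x y :: "'a::field"
  assumes "Pj j (x,y)" shows "Pj j (x/y, 1)"
proof -
  have y: "y \<noteq> 0" using Pj_y[OF assms] .
  have "(x,y) = (y*(x/y), y*1)" using y by simp
  with assms have "Pj j (y*(x/y), y*1)" by simp
  then show ?thesis using Pj_scale y by blast
qed

lemma Pj_zero_x:
  fixes y :: "'a::field"
  assumes "Pj j (0,y)" shows False
proof -
  have "y \<noteq> 0" using Pj_y[OF assms] .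
  moreover have "(y^20)^3 = 0" using assms unfolding Pj_def by simp
  ultimately show False by simp
qed

lemma pow3: "(x::'a::comm_ring_1)^3 = x*(x*x)" by (simp add: eval_nat_numeral)
lemma pow5: "(x::'a::comm_ring_1)^5 = x*(x*(x*(x*x)))" by (simp add: eval_nat_numeral)

lemma cancel_r:
  fixes p p' q q' :: "'a::field"
  assumes q0: "q \<noteq> 0" and cross: "p' * q = p * q'"
  shows "q' = (q'/q) * q" "p' = (q'/q) * p"
proof -
  show q'r: "q' = (q'/q) * q" using q0 by simp
  have "p' * q = ((q'/q) * p) * q" using cross q0 by simp
  then show "p' = (q'/q) * p" using q0 by (metis mult_right_cancel)
qed

lemma solve1:
  fixes k X c m u :: "'a::field"
  assumes "k \<noteq> 0" "k * X = c * (m * u)"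
  shows "X = (c * m / k) * u"
proof -
  have "X = (k * X) / k" using assms(1) by simp
  also have "\<dots> = (c * m / k) * u" unfolding assms(2) by simp
  finally show ?thesis .
qed

context icos
begin

lemma te_tmul:
  assumes "t^2 = ze z m1 * t + ze z m0"
  shows "te z t (tmul (m1,m0) P Q) = te z t P * te z t Q"
proof -
  obtain u v where P: "P = (u,v)" by (cases P)
  obtain u' v' where Q: "Q = (u',v')" by (cases Q)
  show ?thesis unfolding P Q
    by (simp add: ze_zmul ze_zadd tmul_aux[OF assms])
qed

lemma te_tadd: "te z t (tadd P Q) = te z t P + te z t Q"
proof -
  obtain u v where P: "P = (u,v)" by (cases P)
  obtain u' v' where Q: "Q = (u',v')" by (cases Q)
  show ?thesis unfolding P Q by (simp add: ze_zadd algebra_simps)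
qed

lemma te_teval:
  assumes "t^2 = ze z m1 * t + ze z m0"
  shows "te z t (teval (m1,m0) cs) = hor cs t"
proof (induction cs)
  case Nil then show ?case by simp
next
  case (Cons c cs)
  have "te z t (teval (m1,m0) (c # cs)) =
        te z t ((0,0,0,0),(c,0,0,0)) + te z t ((1,0,0,0),(0,0,0,0)) * te z t (teval (m1,m0) cs)"
    by (simp only: teval.simps te_tadd te_tmul[OF assms])
  also have "\<dots> = of_int c + t * hor cs t" using Cons.IH by simp
  finally show ?case by simp
qed

lemma tnz_ne0:
  assumes "t^2 = ze z m1 * t + ze z m0" "tnz (m1,m0) P"
  shows "te z t P \<noteq> 0"
proof -
  obtain u v where P: "P = (u,v)" by (cases P)
  obtain a b where ab: "tmul (m1,m0) (u,v) (zneg u, zadd v (zmul u m1)) = (a,b)"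
    by (cases "tmul (m1,m0) (u,v) (zneg u, zadd v (zmul u m1))")
  from assms(2) have "a = (0,0,0,0) \<and> nzc b" unfolding P by (simp only: tnz.simps fst_conv ab prod.case)
  then have a0: "a = (0,0,0,0)" and nb: "nzc b" by auto
  have "te z t (u,v) * te z t (zneg u, zadd v (zmul u m1)) = te z t (a,b)"
    by (simp only: te_tmul[OF assms(1), symmetric] ab)
  also have "\<dots> = ze z b" using a0 by simp
  finally show ?thesis using nzc_ne0[OF nb] unfolding P by auto
qed

lemma z2_ne1: "z^2 \<noteq> 1"
proof
  assume h: "z^2 = 1"
  have "z^5 = (z^2)^2 * z" by (simp flip: power_mult power_Suc2)
  then have "z^5 = z" using h by simp
  with z5 z1 show False by simp
qed

lemma eig_diag:
  assumes "Pj j (x,y)" "w \<noteq> 1" "app (w,0,0,1) (x,y) = (lam*x, lam*y)"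
  shows False
proof -
  have y: "y \<noteq> 0" using Pj_y[OF assms(1)] .
  have e1: "w*x = lam*x" and e2: "y = lam*y" using assms(3) by (simp_all only: app.simps prod.inject mult_zero_left mult_1_left add_0_right add_0_left)
  from e2 y have "lam = 1" by simp
  with e1 have "w*x = x" by simp
  then have "(w - 1) * x = 0" by (simp add: algebra_simps)
  with assms(2) have x0: "x = 0" by simp
  from assms(1) have "Pj j (0,y)" unfolding x0 .
  then show False by (rule Pj_zero_x)
qed

lemma eig0: assumes "Pj j (x,y)" "app (me z S4) (x,y) = (lam*x, lam*y)" shows False
proof -
  have "me z S4 = (z,0,0,1)" by (simp add: S4_def)
  with assms(2) have "app (z,0,0,1) (x,y) = (lam*x, lam*y)" by simp
  then show False by (rule eig_diag[OF assms(1) z1])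
qed

lemma eig1: assumes "Pj j (x,y)" "app (me z S24) (x,y) = (lam*x, lam*y)" shows False
proof -
  have "me z S24 = (z^2,0,0,1)" by (rule me_S24)
  with assms(2) have "app (z^2,0,0,1) (x,y) = (lam*x, lam*y)" by simp
  then show False by (rule eig_diag[OF assms(1) z2_ne1])
qed

lemma eig2: assumes "Pj j (x,y)" "app (me z U4) (x,y) = (lam*x, lam*y)" shows False
proof -
  have y: "y \<noteq> 0" using Pj_y[OF assms(1)] .
  have P1: "Pj j (x/y, 1)" by (rule Pj_div[OF assms(1)])
  have "me z U4 = (0,-1,1,0)" by (simp add: U4_def)
  with assms(2) have "app (0,-1,1,0) (x,y) = (lam*x, lam*y)" by simp
  then have e: "0*x + (-1)*y = lam*x" "1*x + 0*y = lam*y" by (simp_all only: app.simps prod.inject)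
  define t where "t = x/y"
  have q0: "t^2 = (0 - 0)*t + (-1)" using eig_quad[OF e y] unfolding t_def .
  have q: "t^2 = ze z (0,0,0,0) * t + ze z (-1,0,0,0)" using q0 by simp
  have Ht: "hhp (t,1) = te z t (teval ((0,0,0,0),(-1,0,0,0)) hl)" by (simp only: hhp_hor te_teval[OF q])
  have Ft: "ffp (t,1) = te z t (teval ((0,0,0,0),(-1,0,0,0)) fl)" by (simp only: ffp_hor te_teval[OF q])
  have C: "te z t ((0,0,0,0),(1728,0,0,0)) = 1728" by simp
  have Z: "te z t ((0,0,0,0),(0,0,0,0)) = 0" by simp
  have U: "tadd (tmul ((0,0,0,0),(-1,0,0,0)) (teval ((0,0,0,0),(-1,0,0,0)) hl) (tmul ((0,0,0,0),(-1,0,0,0)) (teval ((0,0,0,0),(-1,0,0,0)) hl) (teval ((0,0,0,0),(-1,0,0,0)) hl)))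
    (tmul ((0,0,0,0),(-1,0,0,0)) ((0,0,0,0),(1728,0,0,0)) (tmul ((0,0,0,0),(-1,0,0,0)) (teval ((0,0,0,0),(-1,0,0,0)) fl) (tmul ((0,0,0,0),(-1,0,0,0)) (teval ((0,0,0,0),(-1,0,0,0)) fl)
      (tmul ((0,0,0,0),(-1,0,0,0)) (teval ((0,0,0,0),(-1,0,0,0)) fl) (tmul ((0,0,0,0),(-1,0,0,0)) (teval ((0,0,0,0),(-1,0,0,0)) fl) (teval ((0,0,0,0),(-1,0,0,0)) fl)))))) = ((0,0,0,0),(0,0,0,0))"
    using uchk[THEN conjunct1] unfolding mU_def .
  have "hhp (t,1) * (hhp (t,1) * hhp (t,1)) + 1728 * (ffp (t,1) * (ffp (t,1) * (ffp (t,1) * (ffp (t,1) * ffp (t,1))))) = 0"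
    using arg_cong[OF U, of "te z t"] by (simp only: te_tadd te_tmul[OF q] Ht Ft C Z)
  then have h1: "hhp (t,1) ^ 3 + 1728 * ffp (t,1) ^ 5 = 0"
    by (simp only: pow3 pow5)
  have h2: "hhp (t,1) ^ 3 + j * ffp (t,1) ^ 5 = 0" using P1 unfolding Pj_def t_def by (simp del: ffp.simps hhp.simps)
  define F where "F = ffp (t,1)"
  define H where "H = hhp (t,1)"
  have h1': "H^3 + 1728 * F^5 = 0" using h1 unfolding F_def H_def .
  have h2': "H^3 + j * F^5 = 0" using h2 unfolding F_def H_def .
  have "(j - 1728) * F^5 = (H^3 + j * F^5) - (H^3 + 1728 * F^5)" by (simp add: algebra_simps)
  also have "\<dots> = 0" by (simp only: h1' h2' diff_self)
  finally have "F^5 = 0" using j1728 by simp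
  then have "F = 0" by simp
  then have F0: "ffp (t,1) = 0" unfolding F_def .
  have "tnz ((0,0,0,0),(-1,0,0,0)) (teval ((0,0,0,0),(-1,0,0,0)) fl)"
    using uchk[THEN conjunct2] unfolding mU_def .
  then have "ffp (t,1) \<noteq> 0" unfolding Ft by (rule tnz_ne0[OF q])
  with F0 show False by (simp only: not_True_eq_False)
qed

lemma eig3: assumes "Pj j (x,y)" "app (me z R34) (x,y) = (lam*x, lam*y)" shows False
proof -
  have y: "y \<noteq> 0" using Pj_y[OF assms(1)] .
  have P1: "Pj j (x/y, 1)" by (rule Pj_div[OF assms(1)])
  have "me z R34 = (ze z (-1,-1,-1,0), z, 1, ze z (0,0,-1,-1))" by (rule me_R34)
  with assms(2) have "app (ze z (-1,-1,-1,0), z, 1, ze z (0,0,-1,-1)) (x,y) = (lam*x, lam*y)" by simp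
  then have e: "ze z (-1,-1,-1,0)*x + z*y = lam*x" "1*x + ze z (0,0,-1,-1)*y = lam*y"
    by (simp_all only: app.simps prod.inject)
  define t where "t = x/y"
  have q0: "t^2 = (ze z (-1,-1,-1,0) - ze z (0,0,-1,-1))*t + z"
    using eig_quad[OF e y] unfolding t_def .
  have m1: "ze z (-1,-1,-1,0) - ze z (0,0,-1,-1) = ze z (-1,-1,0,1)" by (simp add: algebra_simps)
  have m0: "z = ze z (0,1,0,0)" by simp
  have q: "t^2 = ze z (-1,-1,0,1) * t + ze z (0,1,0,0)"
    using q0 unfolding m1 by (simp only: m0[symmetric])
  have tv: "teval ((-1,-1,0,1),(0,1,0,0)) hl = ((0,0,0,0),(0,0,0,0))"
    using r3chk[THEN conjunct1] unfolding mR_def .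
  have "hhp (t,1) = te z t (teval ((-1,-1,0,1),(0,1,0,0)) hl)" by (simp only: hhp_hor te_teval[OF q])
  also have "\<dots> = 0" unfolding tv by simp
  finally have Ht: "hhp (t,1) = 0" .
  have "tnz ((-1,-1,0,1),(0,1,0,0)) (teval ((-1,-1,0,1),(0,1,0,0)) fl)"
    using r3chk[THEN conjunct2] unfolding mR_def .
  then have "te z t (teval ((-1,-1,0,1),(0,1,0,0)) fl) \<noteq> 0" by (rule tnz_ne0[OF q])
  moreover have "ffp (t,1) = te z t (teval ((-1,-1,0,1),(0,1,0,0)) fl)" by (simp only: ffp_hor te_teval[OF q])
  ultimately have Ft: "ffp (t,1) \<noteq> 0" by metis
  have h2: "hhp (t,1) ^ 3 + j * ffp (t,1) ^ 5 = 0" using P1 unfolding Pj_def t_def by (simp del: ffp.simps hhp.simps)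
  define F where "F = ffp (t,1)"
  have "j * F ^ 5 = 0" using h2 Ht unfolding F_def by (simp del: ffp.simps hhp.simps)
  moreover have "F \<noteq> 0" using Ft unfolding F_def .
  ultimately show False using j0 by simp
qed

lemma eigen_false:
  assumes "n < 4" "Pj j u" "app (me z (rmat n)) u = (lam * fst u, lam * snd u)"
  shows False
proof -
  obtain x y where u: "u = (x,y)" by (cases u)
  have Pxy: "Pj j (x,y)" using assms(2) u by simp
  have E: "app (me z (rmat n)) (x,y) = (lam * x, lam * y)" using assms(3) u by simp
  have "n = 0 \<or> n = 1 \<or> n = 2 \<or> n = 3" using assms(1) by linarith
  then show False
  proof (elim disjE)
    assume "n = 0"
    then have "app (me z S4) (x,y) = (lam*x, lam*y)" using E by (simp add: rmat_def)
    then show False by (rule eig0[OF Pxy])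
  next
    assume "n = 1"
    then have "app (me z S24) (x,y) = (lam*x, lam*y)" using E by (simp add: rmat_def)
    then show False by (rule eig1[OF Pxy])
  next
    assume "n = 2"
    then have "app (me z U4) (x,y) = (lam*x, lam*y)" using E by (simp add: rmat_def)
    then show False by (rule eig2[OF Pxy])
  next
    assume "n = 3"
    then have "app (me z R34) (x,y) = (lam*x, lam*y)" using E by (simp add: rmat_def)
    then show False by (rule eig3[OF Pxy])
  qed
qed

end

lemma ffp_one: "ffp (x,1) = -(x * (1 - 11*x^5 - (x^5)^2))"
proof -
  have "ffp (x,1) = x^11 + 11*x^6 - x" by simp
  also have "\<dots> = -(x * (1 - 11*x^5 - (x^5)^2))" by algebra
  finally show ?thesis .
qed

lemma hhp_one: "hhp (x,1) = (x^5)^4 - 228*(x^5)^3 + 494*(x^5)^2 + 228*x^5 + 1"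
proof -
  have "hhp (x,1) = x^20 - 228*x^15 + 494*x^10 + 228*x^5 + 1" by simp
  also have "\<dots> = (x^5)^4 - 228*(x^5)^3 + 494*(x^5)^2 + 228*x^5 + 1" by (simp flip: power_mult)
  finally show ?thesis .
qed

lemma neg5: "(-(x*w))^5 = -(x^5*(w::'a::field)^5)"
  by (simp add: power_mult_distrib)

context icos
begin

lemma Pj_v0: "Pj j (a1, 1)"
proof -
  define X where "X = a1^5"
  define W where "W = 1 - 11*X - X^2"
  have F5: "ffp (a1,1)^5 = -(X * W^5)"
    unfolding ffp_one neg5 X_def W_def ..
  have H: "hhp (a1,1) = X^4 - 228*X^3 + 494*X^2 + 228*X + 1"
    unfolding hhp_one X_def ..
  have "hhp (a1,1)^3 + j * ffp (a1,1)^5 = (X^4 - 228*X^3 + 494*X^2 + 228*X + 1)^3 - j*X*W^5"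
    unfolding F5 H by (simp add: algebra_simps)
  also have "\<dots> = Gpol (a1^5) j" unfolding Gpol_def X_def W_def ..
  also have "\<dots> = 0" by (rule Gz)
  finally show ?thesis unfolding Pj_def by (simp del: ffp.simps hhp.simps)
qed

lemma core:
  assumes M: "M \<in> G60mats z" and Mk: "M = smul2 k (me z L)" and k: "k \<noteq> 0"
    and cert: "smul4 k1 (mmul4 (rmat n) (evalword w)) = smul4 k2 (mmul4 (evalword w) (gmat L))"
    and nk1: "nzc k1" and n4: "n < 4"
  shows "\<exists>z'. mob_app M a1 = Some z' \<and> z' \<notin> Fprime"
proof -
  obtain L1 L2 L3 L4 where Ls: "L = (L1,L2,L3,L4)" by (rule prod_cases4)
  define a where "a = ze z L1"
  define b where "b = ze z L2"
  define c where "c = ze z L3"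
  define d where "d = ze z L4"
  have meL: "me z L = (a,b,c,d)" unfolding Ls a_def b_def c_def d_def by simp
  have meC: "me z (conj4 L) = (a^l, b^l, c^l, d^l)"
    unfolding Ls a_def b_def c_def d_def by (simp add: fr_ze)
  define p where "p = a*a1 + b"
  define q where "q = c*a1 + d"
  have v0: "Pj j (a1,1)" by (rule Pj_v0)
  have "app M (a1,1) = (k*p, k*q)" unfolding Mk meL p_def q_def by (simp add: algebra_simps)
  then have "Pj j (k*p, k*q)" using Pj_G60[OF M v0] by simp
  then have Ppq: "Pj j (p,q)" using Pj_scale k by blast
  have q0: "q \<noteq> 0" using Pj_y[OF Ppq] .
  have mob: "mob_app M a1 = Some (p/q)"
    unfolding Mk mob_smul[OF k] meL using q0 by (simp add: p_def q_def)
  have "p/q \<notin> Fprime"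
  proof
    assume F: "p/q \<in> Fprime"
    define p' where "p' = a^l * a1 + b^l"
    define q' where "q' = c^l * a1 + d^l"
    have pl: "p^l = p'" unfolding p_def p'_def by (simp only: fr_add power_mult_distrib fr_F[OF a1F])
    have ql: "q^l = q'" unfolding q_def q'_def by (simp only: fr_add power_mult_distrib fr_F[OF a1F])
    have q'0: "q' \<noteq> 0" unfolding ql[symmetric] using q0 by simp
    have "(p/q)^l = p/q" by (rule fr_F[OF F])
    then have "p'/q' = p/q" unfolding power_divide pl ql .
    then have cross: "p' * q = p * q'" using q0 q'0 by (simp add: frac_eq_eq)
    define r where "r = q'/q"
    have q'r: "q' = r * q" and p'r: "p' = r * p" using cancel_r[OF q0 cross] unfolding r_def by blast+
    define mu where "mu = r * (a*d - b*c)"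
    have G: "me z (gmat L) = mmul (adjm (a,b,c,d)) (a^l,b^l,c^l,d^l)"
      unfolding gmat_def me_mmul4 me_adj4 meL meC ..
    have Gv: "app (me z (gmat L)) (a1,1) = (mu*a1, mu*1)"
    proof -
      have "app (me z (gmat L)) (a1,1) = (d*p' - b*q', -c*p' + a*q')"
        unfolding G app_mmul by (simp add: p'_def q'_def algebra_simps)
      also have "\<dots> = (mu*a1, mu*1)"
        unfolding p'r q'r mu_def p_def q_def by (simp add: algebra_simps)
      finally show ?thesis .
    qed
    define u where "u = app (me z (evalword w)) (a1,1)"
    have Pu: "Pj j u" unfolding u_def by (rule Pj_G60[OF word_G60 v0])
    define R where "R = me z (rmat n)"
    define Hm where "Hm = me z (evalword w)"
    have C: "smul2 (ze z k1) (mmul R Hm) = smul2 (ze z k2) (mmul Hm (me z (gmat L)))"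
      using arg_cong[OF cert, of "me z"] unfolding R_def Hm_def by (simp only: me_smul4 me_mmul4)
    have "(ze z k1 * fst (app R u), ze z k1 * snd (app R u)) = app (smul2 (ze z k1) (mmul R Hm)) (a1,1)"
      unfolding app_smul app_mmul u_def Hm_def ..
    also have "\<dots> = app (smul2 (ze z k2) (mmul Hm (me z (gmat L)))) (a1,1)"
      by (simp only: C)
    also have "\<dots> = (ze z k2 * (mu * fst u), ze z k2 * (mu * snd u))"
      unfolding app_smul app_mmul Gv app_scale u_def Hm_def by simp
    finally have "(ze z k1 * fst (app R u), ze z k1 * snd (app R u)) =
        (ze z k2 * (mu * fst u), ze z k2 * (mu * snd u))" .
    then have c1: "ze z k1 * fst (app R u) = ze z k2 * (mu * fst u)"
      and c2: "ze z k1 * snd (app R u) = ze z k2 * (mu * snd u)" by simp_all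
    have "app R u = (fst (app R u), snd (app R u))" by simp
    also have "\<dots> = ((ze z k2 * mu / ze z k1) * fst u, (ze z k2 * mu / ze z k1) * snd u)"
      using solve1[OF nzc_ne0[OF nk1] c1] solve1[OF nzc_ne0[OF nk1] c2] by simp
    finally have "app R u = ((ze z k2 * mu / ze z k1) * fst u, (ze z k2 * mu / ze z k1) * snd u)" .
    then show False using eigen_false[OF n4 Pu] unfolding R_def by blast
  qed
  then show ?thesis using mob by blast
qed

lemma main:
  "\<forall>M \<in> G60mats z. (\<forall>N \<in> Hmats z. \<not> proj_eq M N) \<longrightarrow>
     (\<exists>z'. mob_app M a1 = Some z' \<and> z' \<notin> Fprime)"
proof (intro ballI impI)
  fix M assume M: "M \<in> G60mats z" and nH: "\<forall>N\<in>Hmats z. \<not> proj_eq M N"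
  obtain L k where L: "L \<in> set reps" "k \<noteq> 0" "M = smul2 k (me z L)" using G60_rep[OF M] by blast
  obtain k1 k2 LS k1' k2' LT c where row: "chk_row reps (L,k1,k2,LS,k1',k2',LT,c)"
    using row_ok[OF L(1)] by blast
  then have cc: "chk_cert L c" by (simp only: chk_row.simps)
  show "\<exists>z'. mob_app M a1 = Some z' \<and> z' \<notin> Fprime"
  proof (cases c)
    case InH
    with cc have "L \<in> set [I4, T4, U4, mmul4 T4 U4]" by simp
    then have "me z L \<in> Hmats z" by (auto simp: Hmats_def me_I4 me_T4 me_U4 me_mmul4)
    moreover have "proj_eq M (me z L)" unfolding proj_eq_def using L by blast
    ultimately show ?thesis using nH by blast
  next
    case (Cert w n k1c k2c)
    with cc have h: "n < 4" "nzc k1c"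
      "smul4 k1c (mmul4 (rmat n) (evalword w)) = smul4 k2c (mmul4 (evalword w) (gmat L))"
      by simp_all
    show ?thesis by (rule core[OF M L(3) L(2) h(3) h(2) h(1)])
  qed
qed

end

theorem proposition3p3:
  fixes l :: nat and \<zeta> j a1 :: "'a::{field,finite}"
  assumes "prime l" and "l mod 5 = 4"
    and "card (UNIV :: 'a set) = l^2" and "of_nat l = (0::'a)"
    and "\<zeta>^5 = 1" and "\<zeta> \<noteq> 1"
    and "j \<in> Fprime" and "j \<noteq> 0" and "j \<noteq> 1728"
    and "a1 \<in> Fprime" and "Gpol (a1^5) j = 0"
  shows "\<forall>M \<in> G60mats \<zeta>. (\<forall>N \<in> Hmats \<zeta>. \<not> proj_eq M N) \<longrightarrow>
           (\<exists>z. mob_app M a1 = Some z \<and> z \<notin> Fprime)"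
proof -
  interpret icos l \<zeta> j a1
    using assms(1,2,4,5,6,8,9,10,11) by unfold_locales assumption+
  show ?thesis by (rule main)
qed

end
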